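(* Let $X$ be a metric graph with its usual length distance $d$ and one-dimensional Hausdorff measure $\mathcal{H}^1$, and suppose $(X,d,\mathcal{H}^1)$ satisfies $\mathrm{BG}(k,n)$ with constant $C$ for some $k\in\mathbb{R}$, $n\ge1$, $C\ge1$. Then $\deg(x)\le C+1$ for all $x\in X$.
   Context: A metric measure space $(X,d,\mu)$ means a complete, locally compact length space $(X,d)$ equipped with a Borel measure $\mu$. $B_r(x)$ and $\overline B_r(x)$ denote the open and closed balls of radius $r$ about $x$. For $k\in\mathbb{R}$ let $\mathsf s_k(t)=\sin(\sqrt{k}\,t)/\sqrt{k}$ if $k>0$, $\mathsf s_k(t)=t$ if $k=0$, $\mathsf s_k(t)=\sinh(\sqrt{-k}\,t)/\sqrt{-k}$ if $k<0$. For real $n\ge1$ and $0\le r_1<r_2$ set $V_{k,n}(r_1,r_2)=\alpha_{n-1}\int_{r_1}^{r_2}\mathsf s_k(t)^{n-1}\,dt$ with $\alpha_{n-1}=2\pi^{n/2}/\Gamma(n/2)$. For $x\in X$ let $A_{r_1,r_2}(x)=B_{r_2}(x)\setminus\overline B_{r_1}(x)$ and $A_{0,r}(x)=B_r(x)$. For a measurable $U\subset A_{r_1,r_2}(x)$ and $0\le s_1<s_2$ with $s_1\le r_1$, $s_2\le r_2$, let $S_{s_1,s_2}(x,U)=\{y\in A_{s_1,s_2}(x): d(x,y)+d(y,z)=d(x,z)\text{ for some }z\in U\}$. $(X,d,\mu)$ satisfies $\mathrm{BG}(k,n)$ with constant $C\ge1$ if for every $x\in X$, all $0\le r_1<r_2$,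 $0\le s_1<s_2$ with $s_1\le r_1$, $s_2\le r_2$, and every measurable $U\subset A_{r_1,r_2}(x)$, one has $\mu(U)/\mu(S_{s_1,s_2}(x,U))\le C\,V_{k,n}(r_1,r_2)/V_{k,n}(s_1,s_2)$. The degree $\deg(x)$ is the supremum, over all connected neighborhoods $U$ of $x$, of the number of connected components of $U\setminus\{x\}$. *)

theory Defs
  imports "HOL-Analysis.Analysis"
begin

definition curve_length :: "(real \<Rightarrow> 'a::metric_space) \<Rightarrow> real \<Rightarrow> real \<Rightarrow> ennreal" where
  "curve_length g a b =
     (SUP ts \<in> {ts. sorted_wrt (<) ts \<and> ts \<noteq> [] \<and> hd ts = a \<and> last ts = b}.
        ennreal (\<Sum>i<length ts - 1. dist (g (ts ! i)) (g (ts ! (i + 1)))))"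

definition length_space :: "'a::metric_space itself \<Rightarrow> bool" where
  "length_space _ \<longleftrightarrow>
     (\<forall>x y::'a. ennreal (dist x y) =
        (INF g \<in> {g. continuous_on {0..1} g \<and> g 0 = x \<and> g 1 = y}. curve_length g 0 1))"

definition loc_compact_metric :: "'a::metric_space itself \<Rightarrow> bool" where
  "loc_compact_metric _ \<longleftrightarrow> (\<forall>x::'a. \<exists>U. open U \<and> x \<in> U \<and> compact (closure U))"

text \<open>Together with the length-space assumption this
  says that d is the usual length distance of the graph.\<close>
definition metric_graph :: "'a::metric_space set \<Rightarrow> nat set \<Rightarrow> (nat \<Rightarrow> real) \<Rightarrow> (nat \<Rightarrow> real \<Rightarrow> 'a) \<Rightarrow> bool" where
  "metric_graph V E l gamma \<longleftrightarrow>
     (\<forall>e\<in>E. 0 < l e \<and> continuous_on {0..l e} (gamma e) \<and> inj_on (gamma e) {0<..<l e}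
        \<and> gamma e 0 \<in> V \<and> gamma e (l e) \<in> V
        \<and> (\<forall>a b. 0 \<le> a \<longrightarrow> a \<le> b \<longrightarrow> b \<le> l e \<longrightarrow> curve_length (gamma e) a b = ennreal (b - a))
        \<and> gamma e ` {0<..<l e} \<inter> V = {})
   \<and> (\<forall>e\<in>E. \<forall>e'\<in>E. e \<noteq> e' \<longrightarrow> gamma e ` {0<..<l e} \<inter> gamma e' ` {0<..<l e'} = {})
   \<and> UNIV = V \<union> (\<Union>e\<in>E. gamma e ` {0..l e})
   \<and> (\<forall>x. \<exists>U. open U \<and> x \<in> U \<and> finite (V \<inter> U)
              \<and> finite {e\<in>E. gamma e ` {0..l e} \<inter> U \<noteq> {}})"

definition hausdorff1_pre :: "real \<Rightarrow> 'a::metric_space set \<Rightarrow> ennreal" where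
  "hausdorff1_pre \<delta> A =
     (INF D \<in> {D :: nat \<Rightarrow> 'a set. A \<subseteq> (\<Union>i. D i) \<and> (\<forall>i. bounded (D i) \<and> diameter (D i) \<le> \<delta>)}.
        (\<Sum>i. ennreal (diameter (D i))))"

definition hausdorff1 :: "'a::metric_space set \<Rightarrow> ennreal" where
  "hausdorff1 A = (SUP \<delta> \<in> {0<..}. hausdorff1_pre \<delta> A)"

definition sk :: "real \<Rightarrow> real \<Rightarrow> real" where
  "sk k t = (if k > 0 then sin (sqrt k * t) / sqrt k
             else if k = 0 then t
             else sinh (sqrt (- k) * t) / sqrt (- k))"

definition alpha_const :: "real \<Rightarrow> real" where
  "alpha_const m = 2 * pi powr ((m + 1) / 2) / Gamma ((m + 1) / 2)"

definition Vkn :: "real \<Rightarrow> real \<Rightarrow> real \<Rightarrow> real \<Rightarrow> real" where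
  "Vkn k n r1 r2 = alpha_const (n - 1) * integral {r1..r2} (\<lambda>t. sk k t powr (n - 1))"

definition annulus :: "'a::metric_space \<Rightarrow> real \<Rightarrow> real \<Rightarrow> 'a set" where
  "annulus x r1 r2 = (if r1 = 0 then ball x r2 else ball x r2 - cball x r1)"

definition Sset :: "real \<Rightarrow> real \<Rightarrow> 'a::metric_space \<Rightarrow> 'a set \<Rightarrow> 'a set" where
  "Sset s1 s2 x U = {y \<in> annulus x s1 s2. \<exists>z\<in>U. dist x y + dist y z = dist x z}"

definition BG :: "'a::metric_space itself \<Rightarrow> real \<Rightarrow> real \<Rightarrow> real \<Rightarrow> bool" where
  "BG _ k n C \<longleftrightarrow>
     (\<forall>(x::'a) r1 r2 s1 s2 U. 0 \<le> r1 \<longrightarrow> r1 < r2 \<longrightarrow> 0 \<le> s1 \<longrightarrow> s1 < s2 \<longrightarrow> s1 \<le> r1 \<longrightarrow> s2 \<le> r2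
        \<longrightarrow> U \<in> sets borel \<longrightarrow> U \<subseteq> annulus x r1 r2
        \<longrightarrow> hausdorff1 U / hausdorff1 (Sset s1 s2 x U)
              \<le> ennreal C * ennreal (Vkn k n r1 r2) / ennreal (Vkn k n s1 s2))"

definition num_components :: "'a::topological_space set \<Rightarrow> ereal" where
  "num_components S = (if finite (components S) then ereal (real (card (components S))) else \<infinity>)"

definition deg :: "'a::topological_space \<Rightarrow> ereal" where
  "deg x = (SUP U \<in> {U. connected U \<and> x \<in> interior U}. num_components (U - {x}))"

end

theory Submission
  imports Defs
begin

fun psum :: "(real \<Rightarrow> 'a::metric_space) \<Rightarrow> real list \<Rightarrow> real" where
  "psum g (a # b # xs) = dist (g a) (g b) + psum g (b # xs)"
| "psum g _ = 0"

lemma psum_nonneg: "0 \<le> psum g xs"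
  by (induction g xs rule: psum.induct) auto

lemma psum_idx: "(\<Sum>i<length ts - 1. dist (g (ts ! i)) (g (ts ! (i + 1)))) = psum g ts"
proof (induction g ts rule: psum.induct)
  case (1 g a b xs)
  have "(\<Sum>i<length (a # b # xs) - 1. dist (g ((a # b # xs) ! i)) (g ((a # b # xs) ! (i + 1))))
      = (\<Sum>i<Suc (length (b # xs) - 1). dist (g ((a # b # xs) ! i)) (g ((a # b # xs) ! (i + 1))))"
    by simp
  also have "\<dots> = dist (g a) (g b) + (\<Sum>i<length (b # xs) - 1. dist (g ((b # xs) ! i)) (g ((b # xs) ! (i + 1))))"
    by (subst sum.lessThan_Suc_shift) simp
  finally show ?case using 1 by simp
qed auto

lemma psum_Cons2: "psum g (a # b # xs) = dist (g a) (g b) + psum g (b # xs)" by simp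

lemma remdups_adj_Cons_hd: "\<exists>r. remdups_adj (y # xs) = y # r"
proof -
  have "remdups_adj (y # xs) \<noteq> []" by simp
  then have "remdups_adj (y # xs) = hd (remdups_adj (y # xs)) # tl (remdups_adj (y # xs))" by simp
  then show ?thesis by (metis hd_remdups_adj list.sel(1))
qed

lemma sorted_le_last: "sorted xs \<Longrightarrow> x \<in> set xs \<Longrightarrow> x \<le> (last xs::real)"
proof (induction xs)
  case (Cons a xs)
  show ?case
  proof (cases "xs = []")
    case True then show ?thesis using Cons by simp
  next
    case False
    have "a \<le> last xs" using Cons.prems(1) False last_in_set by auto
    then show ?thesis using Cons False by auto
  qed
qed simp

lemma sorted_hd_le: "sorted xs \<Longrightarrow> x \<in> set xs \<Longrightarrow> hd xs \<le> (x::real)"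
  by (cases xs) auto

lemma strict_remdups_adj: "sorted (xs::real list) \<Longrightarrow> sorted_wrt (<) (remdups_adj xs)"
proof (induction xs rule: remdups_adj.induct)
  case (3 x y xs)
  show ?case
  proof (cases "x = y")
    case True then show ?thesis using 3 by simp
  next
    case False
    obtain r where r: "remdups_adj (y # xs) = y # r" using remdups_adj_Cons_hd[of y xs] by (elim exE)
    have "sorted_wrt (<) (y # r)" using 3 False r by simp
    moreover have "x < y" using 3(3) False by simp
    moreover have "\<forall>z\<in>set r. y < z" using \<open>sorted_wrt (<) (y # r)\<close> by simp
    ultimately show ?thesis using False r by auto
  qed
qed auto

lemma psum_remdups_adj: "psum g (remdups_adj xs) = psum g xs"
proof (induction xs rule: remdups_adj.induct)
  case (3 x y xs)
  show ?case
  proof (cases "x = y")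
    case True then show ?thesis using 3 by simp
  next
    case False
    obtain r where r: "remdups_adj (y # xs) = y # r" using remdups_adj_Cons_hd[of y xs] by (elim exE)
    have "psum g (remdups_adj (x # y # xs)) = psum g (x # y # r)" using False r by simp
    also have "\<dots> = dist (g x) (g y) + psum g (y # r)" by simp
    also have "\<dots> = psum g (x # y # xs)" using 3 False r by simp
    finally show ?thesis .
  qed
qed auto

lemma psum_append1: "xs \<noteq> [] \<Longrightarrow> psum g (xs @ [y]) = psum g xs + dist (g (last xs)) (g y)"
  by (induction g xs rule: psum.induct) auto

lemma psum_append: "xs \<noteq> [] \<Longrightarrow> ys \<noteq> [] \<Longrightarrow> last xs = hd ys \<Longrightarrow>
   psum g (xs @ tl ys) = psum g xs + psum g ys"
proof (induction xs)
  case (Cons a xs)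
  show ?case
  proof (cases xs)
    case Nil then show ?thesis using Cons by (cases ys) auto
  next
    case (Cons b xs') then show ?thesis using Cons.IH Cons.prems by simp
  qed
qed simp

definition parts :: "real \<Rightarrow> real \<Rightarrow> real list set" where
  "parts a b = {ts. sorted_wrt (<) ts \<and> ts \<noteq> [] \<and> hd ts = a \<and> last ts = b}"

lemma curve_length_parts: "curve_length g a b = (SUP ts \<in> parts a b. ennreal (psum g ts))"
  unfolding curve_length_def parts_def psum_idx by simp

lemma psum_le_cl:
  assumes "sorted xs" "xs \<noteq> []" "hd xs = a" "last xs = b"
  shows "ennreal (psum g xs) \<le> curve_length g a b"
proof -
  have "sorted_wrt (<) (remdups_adj xs)" by (rule strict_remdups_adj) (fact assms(1))
  moreover have "remdups_adj xs \<noteq> []" using assms(2) by simp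
  moreover have "hd (remdups_adj xs) = a" using assms(3) by (simp add: hd_remdups_adj)
  moreover have "last (remdups_adj xs) = b" using assms(4) by (simp add: last_remdups_adj)
  ultimately have "remdups_adj xs \<in> parts a b" unfolding parts_def by blast
  then have "ennreal (psum g (remdups_adj xs)) \<le> (SUP ts\<in>parts a b. ennreal (psum g ts))"
    by (rule SUP_upper)
  then show ?thesis by (simp only: curve_length_parts psum_remdups_adj)
qed

lemma cl_le:
  assumes "\<And>ts. ts \<in> parts a b \<Longrightarrow> psum g ts \<le> B"
  shows "curve_length g a b \<le> ennreal B"
  unfolding curve_length_parts by (rule SUP_least, rule ennreal_leI, rule assms)

lemma parts_nonempty: "a \<le> b \<Longrightarrow> parts a b \<noteq> {}"
proof (cases "a = b")
  case True
  then have "[a] \<in> parts a b" by (simp add: parts_def)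
  then show ?thesis by blast
next
  case False
  assume "a \<le> b"
  with False have "[a,b] \<in> parts a b" by (simp add: parts_def)
  then show ?thesis by blast
qed

lemma psum_map_upt: "psum g (map w [0..<Suc N]) = (\<Sum>i<N. dist (g (w i)) (g (w (Suc i))))"
proof (induction N)
  case (Suc N)
  have eq: "map w [0..<Suc (Suc N)] = map w [0..<Suc N] @ [w (Suc N)]" by simp
  have "psum g (map w [0..<Suc (Suc N)]) = psum g (map w [0..<Suc N]) + dist (g (w N)) (g (w (Suc N)))"
    unfolding eq by (subst psum_append1) (simp_all del: upt_Suc add: last_map)
  then show ?case using Suc by (simp del: upt_Suc)
qed simp

lemma seq_le_cl:
  assumes mono: "\<And>i. i < N \<Longrightarrow> w i \<le> w (Suc i)" and "w 0 = a" "w N = b"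
  shows "ennreal (\<Sum>i<N. dist (g (w i)) (g (w (Suc i)))) \<le> curve_length g a b"
proof -
  have m: "w i \<le> w j" if "i \<le> j" "j \<le> N" for i j
    using that
  proof (induction j)
    case (Suc j)
    show ?case
    proof (cases "i = Suc j")
      case False
      then have "i \<le> j" using Suc.prems by simp
      then have "w i \<le> w j" using Suc.IH Suc.prems by simp
      also have "w j \<le> w (Suc j)" using mono[of j] Suc.prems by simp
      finally show ?thesis .
    qed simp
  qed simp
  have "sorted (map w [0..<Suc N])"
    unfolding sorted_iff_nth_mono by (simp del: upt_Suc add: m)
  moreover have "hd (map w [0..<Suc N]) = a" using assms by (simp del: upt_Suc add: hd_map hd_upt)
  moreover have "last (map w [0..<Suc N]) = b" using assms by (simp del: upt_Suc add: last_map)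
  ultimately have "ennreal (psum g (map w [0..<Suc N])) \<le> curve_length g a b"
    by (intro psum_le_cl) simp_all
  then show ?thesis by (simp only: psum_map_upt)
qed

lemma dist_le_cl3:
  assumes "a \<le> t" "t \<le> b"
  shows "ennreal (dist (g a) (g t) + dist (g t) (g b)) \<le> curve_length g a b"
proof -
  have "psum g [a,t,b] = dist (g a) (g t) + dist (g t) (g b)" by simp
  then show ?thesis using psum_le_cl[of "[a,t,b]" a b g] assms by simp
qed

lemma dist_le_cl:
  assumes "a \<le> t" "t \<le> b"
  shows "ennreal (dist (g a) (g t)) \<le> curve_length g a b"
  by (rule order_trans[OF _ dist_le_cl3[OF assms]]) (auto intro: ennreal_leI)

lemma dist_le_cl2:
  assumes "a \<le> b"
  shows "ennreal (dist (g a) (g b)) \<le> curve_length g a b"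
  using dist_le_cl[OF assms order_refl] .

lemma cl_superadd:
  assumes "a \<le> b" "b \<le> c"
  shows "curve_length g a b + curve_length g b c \<le> curve_length g a c"
proof -
  have key: "ennreal (psum g ts1) + ennreal (psum g ts2) \<le> curve_length g a c"
    if t1: "ts1 \<in> parts a b" and t2: "ts2 \<in> parts b c" for ts1 ts2
  proof -
    have p1: "sorted_wrt (<) ts1" "ts1 \<noteq> []" "hd ts1 = a" "last ts1 = b"
      using t1 unfolding parts_def by blast+
    have p2: "sorted_wrt (<) ts2" "ts2 \<noteq> []" "hd ts2 = b" "last ts2 = c"
      using t2 unfolding parts_def by blast+
    have ne: "ts1 \<noteq> []" "ts2 \<noteq> []" and l: "last ts1 = hd ts2" using p1 p2 by simp_all
    obtain h t where ht: "ts2 = h # t" using ne by (cases ts2) auto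
    have s1: "sorted ts1" "sorted ts2" using p1(1) p2(1) by (simp_all add: strict_sorted_iff)
    have "sorted (ts1 @ tl ts2)"
    proof -
      have st: "sorted t" using s1(2) ht by simp
      have "x \<le> y" if "x \<in> set ts1" "y \<in> set t" for x y
      proof -
        have "x \<le> last ts1" using sorted_le_last[OF s1(1) that(1)] .
        moreover have "h \<le> y" using s1(2) ht that(2) by simp
        ultimately show ?thesis using l ht by simp
      qed
      then show ?thesis using s1(1) st ht by (simp add: sorted_append)
    qed
    moreover have "hd (ts1 @ tl ts2) = a" using p1 by simp
    moreover have "last (ts1 @ tl ts2) = c"
    proof (cases "t = []")
      case True
      then show ?thesis using ht p2 l by simp
    next
      case False
      then show ?thesis using ht p2 by simp
    qed
    moreover have "ts1 @ tl ts2 \<noteq> []" using ne by simp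
    ultimately have "ennreal (psum g (ts1 @ tl ts2)) \<le> curve_length g a c"
      by (intro psum_le_cl) blast+
    moreover have "psum g (ts1 @ tl ts2) = psum g ts1 + psum g ts2" by (rule psum_append[OF ne l])
    ultimately show ?thesis by (simp add: ennreal_plus[symmetric] psum_nonneg del: ennreal_plus)
  qed
  have step: "curve_length g a b + ennreal (psum g ts2) \<le> curve_length g a c" if "ts2 \<in> parts b c" for ts2
  proof -
    have "curve_length g a b + ennreal (psum g ts2) = (SUP ts\<in>parts a b. ennreal (psum g ts) + ennreal (psum g ts2))"
      unfolding curve_length_parts[of g a b]
      by (rule ennreal_SUP_add_left[OF parts_nonempty[OF assms(1)], symmetric])
    also have "\<dots> \<le> curve_length g a c" by (rule SUP_least) (rule key[OF _ that])
    finally show ?thesis .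
  qed
  have "curve_length g a b + curve_length g b c = (SUP ts\<in>parts b c. curve_length g a b + ennreal (psum g ts))"
    unfolding curve_length_parts[of g b c]
    by (rule ennreal_SUP_add_right[OF parts_nonempty[OF assms(2)]])
  also have "\<dots> \<le> curve_length g a c" by (rule SUP_least) (rule step)
  finally show ?thesis .
qed

lemma cl_mono:
  assumes "a \<le> b" "b \<le> c" "c \<le> d"
  shows "curve_length g b c \<le> curve_length g a d"
proof -
  have "curve_length g b c \<le> curve_length g a b + curve_length g b c" by simp
  also have "\<dots> \<le> curve_length g a c" using cl_superadd[of a b c g] assms by simp
  also have "\<dots> \<le> curve_length g a c + curve_length g c d" by simp
  also have "\<dots> \<le> curve_length g a d" using cl_superadd[of a c d g] assms by simp
  finally show ?thesis .
qed


lemma parts_info: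
  assumes "ts \<in> parts p q" and N: "N = length ts - 1"
  shows "ts ! 0 = p" "ts ! N = q" "\<And>i. i < N \<Longrightarrow> ts ! i < ts ! Suc i"
    "\<And>i. i \<le> N \<Longrightarrow> p \<le> ts ! i" "\<And>i. i \<le> N \<Longrightarrow> ts ! i \<le> q"
    "\<And>i j. i \<le> j \<Longrightarrow> j \<le> N \<Longrightarrow> ts ! i \<le> ts ! j"
proof -
  have s: "sorted_wrt (<) ts" and ne: "ts \<noteq> []" and h: "hd ts = p" and l: "last ts = q"
    using assms(1) unfolding parts_def by blast+
  have len: "length ts = Suc N" using ne N by (cases ts) auto
  show 0: "ts ! 0 = p" using h ne by (simp add: hd_conv_nth)
  show 1: "ts ! N = q" using l ne N by (simp add: last_conv_nth)
  show "\<And>i. i < N \<Longrightarrow> ts ! i < ts ! Suc i" using sorted_wrt_nth_less[OF s] len by simp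
  show mono: "\<And>i j. i \<le> j \<Longrightarrow> j \<le> N \<Longrightarrow> ts ! i \<le> ts ! j"
  proof -
    fix i j assume "i \<le> j" "j \<le> N"
    then show "ts ! i \<le> ts ! j"
      using sorted_wrt_nth_less[OF s, of i j] len by (cases "i = j") auto
  qed
  show "\<And>i. i \<le> N \<Longrightarrow> p \<le> ts ! i"
  proof -
    fix i assume "i \<le> N" then show "p \<le> ts ! i" using mono[of 0 i] 0 by simp
  qed
  show "\<And>i. i \<le> N \<Longrightarrow> ts ! i \<le> q"
  proof -
    fix i assume "i \<le> N" then show "ts ! i \<le> q" using mono[of i N] 1 by simp
  qed
qed

lemma psum_parts: "ts \<in> parts p q \<Longrightarrow> N = length ts - 1 \<Longrightarrow>
  psum g ts = (\<Sum>i<N. dist (g (ts ! i)) (g (ts ! Suc i)))"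
  using psum_idx[of g ts, symmetric] by simp

lemma arc_lb:
  fixes \<gamma> h :: "real \<Rightarrow> 'a::metric_space"
  assumes ab: "a \<le> b" and gc: "continuous_on {a..b} \<gamma>" and gi: "inj_on \<gamma> {a..b}"
    and gl: "\<And>p q. a \<le> p \<Longrightarrow> p \<le> q \<Longrightarrow> q \<le> b \<Longrightarrow> curve_length \<gamma> p q = ennreal (q - p)"
    and cd: "c \<le> d" and hc: "continuous_on {c..d} h" and hs: "h ` {c..d} \<subseteq> \<gamma> ` {a..b}"
    and p: "p \<in> {a..b}" and q: "q \<in> {a..b}" and hcp: "h c = \<gamma> p" and hdq: "h d = \<gamma> q"
  shows "ennreal \<bar>q - p\<bar> \<le> curve_length h c d"
proof -
  define \<phi> where "\<phi> = the_inv_into {a..b} \<gamma> \<circ> h"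
  have ic: "continuous_on (\<gamma> ` {a..b}) (the_inv_into {a..b} \<gamma>)"
    by (rule continuous_on_inv[OF gc compact_Icc]) (simp add: the_inv_into_f_f gi)
  have pc: "continuous_on {c..d} \<phi>"
    unfolding \<phi>_def by (rule continuous_on_compose[OF hc continuous_on_subset[OF ic hs]])
  have pin: "\<phi> s \<in> {a..b} \<and> \<gamma> (\<phi> s) = h s" if "s \<in> {c..d}" for s
  proof -
    have "h s \<in> \<gamma> ` {a..b}" using hs that by (rule subsetD[OF _ imageI])
    then obtain t where t: "t \<in> {a..b}" "h s = \<gamma> t" by (rule imageE) auto
    then show ?thesis unfolding \<phi>_def using gi by (simp add: the_inv_into_f_f)
  qed
  have pc0: "\<phi> c = p" "\<phi> d = q" unfolding \<phi>_def using hcp hdq gi p q by (simp_all add: the_inv_into_f_f)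
  have cS: "closed {s \<in> {c..d}. t \<le> \<phi> s}" for t
    using continuous_on_closed_Collect_le[of "{c..d}" "\<lambda>s. t" \<phi>] pc by simp
  show ?thesis
  proof (cases "p \<le> q")
    case True
    have "curve_length \<gamma> p q \<le> curve_length h c d"
      unfolding curve_length_parts[of \<gamma> p q]
    proof (rule SUP_least)
      fix ts assume ts: "ts \<in> parts p q"
      define N where "N = length ts - 1"
      note pi = parts_info[OF ts N_def]
      define S where "S i = {s \<in> {c..d}. ts ! i \<le> \<phi> s}" for i
      define u where "u i = Inf (S i)" for i
      have Scl: "closed (S i)" for i unfolding S_def by (rule cS)
      have Sbb: "bdd_below (S i)" "bdd_above (S i)" for i unfolding S_def bdd_below_def bdd_above_def by auto
      have uS: "u i \<in> S i" if "i \<le> N" for i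
      proof -
        have "d \<in> S i" using pi(5)[OF that] pc0 cd unfolding S_def by auto
        then show ?thesis unfolding u_def
          by (intro closed_contains_Inf Sbb Scl) blast
      qed
      have uv: "\<phi> (u i) = ts ! i" if "i \<le> N" for i
      proof -
        have u1: "c \<le> u i" "u i \<le> d" "ts ! i \<le> \<phi> (u i)" using uS[OF that] by (auto simp: S_def)
        have "\<phi> c \<le> ts ! i" using pc0 pi(4)[OF that] by simp
        then obtain s where s: "c \<le> s" "s \<le> u i" "\<phi> s = ts ! i"
          using IVT'[of \<phi> c "ts ! i" "u i"] u1 continuous_on_subset[OF pc] by auto
        then have "s \<in> S i" using u1 by (auto simp: S_def)
        then have "u i \<le> s" unfolding u_def by (intro cInf_lower Sbb)
        then show ?thesis using s by simp
      qed
      have umono: "u i \<le> u j" if "i \<le> j" "j \<le> N" for i j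
      proof -
        have "S j \<subseteq> S i" using pi(6)[OF that] by (auto simp: S_def)
        moreover have "S j \<noteq> {}" using uS[OF that(2)] by blast
        ultimately show ?thesis unfolding u_def
          by (intro cInf_superset_mono Sbb)
      qed
      have ucd: "c \<le> u i" "u i \<le> d" if "i \<le> N" for i using uS[OF that] by (auto simp: S_def)
      have "ennreal (\<Sum>i<N. dist (h (u i)) (h (u (Suc i)))) \<le> curve_length h (u 0) (u N)"
        by (rule seq_le_cl) (auto intro: umono)
      also have "\<dots> \<le> curve_length h c d"
        by (rule cl_mono) (auto intro: umono ucd)
      finally have "ennreal (\<Sum>i<N. dist (h (u i)) (h (u (Suc i)))) \<le> curve_length h c d" .
      moreover have "(\<Sum>i<N. dist (h (u i)) (h (u (Suc i)))) = psum \<gamma> ts"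
      proof -
        have "h (u i) = \<gamma> (ts ! i)" if "i \<le> N" for i
          using pin[of "u i"] ucd[OF that] uv[OF that] by auto
        then have "(\<Sum>i<N. dist (h (u i)) (h (u (Suc i)))) = (\<Sum>i<N. dist (\<gamma> (ts ! i)) (\<gamma> (ts ! Suc i)))"
          by (intro sum.cong) auto
        then show ?thesis using psum_parts[OF ts N_def, of \<gamma>] by linarith
      qed
      ultimately show "ennreal (psum \<gamma> ts) \<le> curve_length h c d" by simp
    qed
    then show ?thesis using gl[of p q] True p q by simp
  next
    case False
    have "curve_length \<gamma> q p \<le> curve_length h c d"
      unfolding curve_length_parts[of \<gamma> q p]
    proof (rule SUP_least)
      fix ts assume ts: "ts \<in> parts q p"
      define N where "N = length ts - 1"
      note pi = parts_info[OF ts N_def]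
      define S where "S i = {s \<in> {c..d}. ts ! i \<le> \<phi> s}" for i
      define u where "u i = Sup (S i)" for i
      have Scl: "closed (S i)" for i unfolding S_def by (rule cS)
      have Sbb: "bdd_below (S i)" "bdd_above (S i)" for i unfolding S_def bdd_below_def bdd_above_def by auto
      have uS: "u i \<in> S i" if "i \<le> N" for i
      proof -
        have "c \<in> S i" using pi(5)[OF that] pc0 cd unfolding S_def by auto
        then show ?thesis unfolding u_def
          by (intro closed_contains_Sup Sbb Scl) blast
      qed
      have ucd: "c \<le> u i" "u i \<le> d" if "i \<le> N" for i using uS[OF that] by (auto simp: S_def)
      have uv: "\<phi> (u i) = ts ! i" if "i \<le> N" for i
      proof -
        have u1: "c \<le> u i" "u i \<le> d" "ts ! i \<le> \<phi> (u i)" using uS[OF that] by (auto simp: S_def)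
        have "\<phi> d \<le> ts ! i" using pc0 pi(4)[OF that] by simp
        then obtain s where s: "u i \<le> s" "s \<le> d" "\<phi> s = ts ! i"
          using IVT2'[of \<phi> d "ts ! i" "u i"] u1 continuous_on_subset[OF pc] by auto
        then have "s \<in> S i" using u1 by (auto simp: S_def)
        then have "s \<le> u i" unfolding u_def by (intro cSup_upper Sbb)
        then show ?thesis using s by simp
      qed
      have umono: "u j \<le> u i" if "i \<le> j" "j \<le> N" for i j
      proof -
        have "S j \<subseteq> S i" using pi(6)[OF that] by (auto simp: S_def)
        moreover have "S j \<noteq> {}" using uS[OF that(2)] by blast
        ultimately show ?thesis unfolding u_def
          by (intro cSup_subset_mono Sbb)
      qed
      define w where "w k = u (N - k)" for k
      have "ennreal (\<Sum>k<N. dist (h (w k)) (h (w (Suc k)))) \<le> curve_length h (w 0) (w N)"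
        by (rule seq_le_cl) (auto simp: w_def intro: umono)
      also have "\<dots> \<le> curve_length h c d"
        by (rule cl_mono) (auto simp: w_def intro: umono ucd)
      finally have A: "ennreal (\<Sum>k<N. dist (h (w k)) (h (w (Suc k)))) \<le> curve_length h c d" .
      have hu: "h (u i) = \<gamma> (ts ! i)" if "i \<le> N" for i
        using pin[of "u i"] ucd[OF that] uv[OF that] by auto
      have "(\<Sum>k<N. dist (h (w k)) (h (w (Suc k)))) = (\<Sum>k<N. dist (\<gamma> (ts ! (N - k))) (\<gamma> (ts ! (N - Suc k))))"
        by (intro sum.cong) (auto simp: w_def hu)
      also have "\<dots> = (\<Sum>i<N. dist (\<gamma> (ts ! i)) (\<gamma> (ts ! Suc i)))"
        by (rule sum.reindex_bij_witness[of _ "\<lambda>k. N - 1 - k" "\<lambda>k. N - 1 - k"])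
           (auto simp: dist_commute Suc_diff_Suc)
      also have "\<dots> = psum \<gamma> ts" using psum_parts[OF ts N_def, of \<gamma>] by linarith
      finally show "ennreal (psum \<gamma> ts) \<le> curve_length h c d" using A by simp
    qed
    then show ?thesis using gl[of q p] False p q by simp
  qed
qed


locale mg =
  fixes V :: "'a::metric_space set" and E :: "nat set" and l :: "nat \<Rightarrow> real"
    and gamma :: "nat \<Rightarrow> real \<Rightarrow> 'a"
  assumes mgraph: "metric_graph V E l gamma" and lsp: "length_space TYPE('a)"
begin

lemmas mg1 = mgraph[unfolded metric_graph_def, THEN conjunct1]
lemmas mg2 = mgraph[unfolded metric_graph_def, THEN conjunct2, THEN conjunct1]
lemmas mg3 = mgraph[unfolded metric_graph_def, THEN conjunct2, THEN conjunct2, THEN conjunct1]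
lemmas mg4 = mgraph[unfolded metric_graph_def, THEN conjunct2, THEN conjunct2, THEN conjunct2]

lemma edge:
  assumes "e \<in> E"
  shows "0 < l e" "continuous_on {0..l e} (gamma e)" "inj_on (gamma e) {0<..<l e}"
    "gamma e 0 \<in> V" "gamma e (l e) \<in> V"
    "\<And>a b. 0 \<le> a \<Longrightarrow> a \<le> b \<Longrightarrow> b \<le> l e \<Longrightarrow> curve_length (gamma e) a b = ennreal (b - a)"
    "gamma e ` {0<..<l e} \<inter> V = {}"
  using mg1 assms by blast+

lemma edge_notV: "e \<in> E \<Longrightarrow> 0 < t \<Longrightarrow> t < l e \<Longrightarrow> gamma e t \<notin> V"
proof
  assume a: "e \<in> E" "0 < t" "t < l e" "gamma e t \<in> V"
  have "gamma e t \<in> gamma e ` {0<..<l e}" using a by (intro imageI) simp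
  then show False using edge(7)[OF a(1)] a(4) by (metis disjoint_iff)
qed

lemma edge_disj:
  assumes "e \<in> E" "e' \<in> E" "e \<noteq> e'" "0 < t" "t < l e" "0 < t'" "t' < l e'"
  shows "gamma e t \<noteq> gamma e' t'"
proof -
  have "gamma e ` {0<..<l e} \<inter> gamma e' ` {0<..<l e'} = {}"
    using mg2[rule_format, OF assms(1) assms(2) assms(3)] .
  moreover have 1: "gamma e t \<in> gamma e ` {0<..<l e}" using assms by (intro imageI) simp
  moreover have 2: "gamma e' t' \<in> gamma e' ` {0<..<l e'}" using assms by (intro imageI) simp
  ultimately show ?thesis by (metis disjoint_iff)
qed

lemma cover: "z \<in> V \<or> (\<exists>e\<in>E. \<exists>t. 0 \<le> t \<and> t \<le> l e \<and> z = gamma e t)"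
proof -
  have "UNIV = V \<union> (\<Union>e\<in>E. gamma e ` {0..l e})" using mg3 .
  then have "z \<in> V \<union> (\<Union>e\<in>E. gamma e ` {0..l e})" by simp
  then consider "z \<in> V" | e where "e \<in> E" "z \<in> gamma e ` {0..l e}" by blast
  then show ?thesis
  proof cases
    case 2
    then obtain t where "t \<in> {0..l e}" "z = gamma e t" by blast
    then show ?thesis using 2(1) by auto
  qed simp
qed

lemma locfin: "\<exists>W. open W \<and> z \<in> W \<and> finite (V \<inter> W) \<and> finite {e\<in>E. gamma e ` {0..l e} \<inter> W \<noteq> {}}"
  using mg4 by blast

lemma edge_dist:
  assumes "e \<in> E" "0 \<le> a" "a \<le> b" "b \<le> l e"
  shows "dist (gamma e a) (gamma e b) \<le> b - a"
proof -
  have "ennreal (dist (gamma e a) (gamma e b)) \<le> curve_length (gamma e) a b"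
    by (rule dist_le_cl2) fact
  also have "\<dots> = ennreal (b - a)" using edge(6)[OF assms(1-4)] .
  finally show ?thesis using assms by (simp add: ennreal_le_iff)
qed

lemma dist_lb:
  fixes p q :: 'a
  assumes "\<And>g. continuous_on {0..1} g \<Longrightarrow> g 0 = p \<Longrightarrow> g 1 = q \<Longrightarrow> ennreal v \<le> curve_length g 0 1"
  shows "v \<le> dist p q"
proof -
  have "ennreal (dist p q) = (INF g \<in> {g. continuous_on {0..1} g \<and> g 0 = p \<and> g 1 = q}. curve_length g 0 1)"
    using lsp[unfolded length_space_def, rule_format, of p q] .
  moreover have "ennreal v \<le> (INF g \<in> {g. continuous_on {0..1} g \<and> g 0 = p \<and> g 1 = q}. curve_length g 0 1)"
    by (rule INF_greatest) (use assms in blast)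
  ultimately have "ennreal v \<le> ennreal (dist p q)" by simp
  then show ?thesis by (simp add: ennreal_le_iff)
qed

definition germs :: "'a \<Rightarrow> (nat \<times> real \<times> real) set" where
  "germs y = {(e,t0,\<sigma>). e \<in> E \<and> 0 \<le> t0 \<and> t0 \<le> l e \<and> gamma e t0 = y \<and>
       ((\<sigma> = 1 \<and> t0 < l e) \<or> (\<sigma> = -1 \<and> 0 < t0))}"

definition bt :: "nat \<times> real \<times> real \<Rightarrow> real \<Rightarrow> 'a" where
  "bt g u = gamma (fst g) (fst (snd g) + snd (snd g) * u)"

definition gb :: "nat \<times> real \<times> real \<Rightarrow> real" where
  "gb g = (if 0 < fst (snd g) \<and> fst (snd g) < l (fst g) then min (fst (snd g)) (l (fst g) - fst (snd g))
           else l (fst g) / 2)"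

definition LL :: "'a \<Rightarrow> real" where
  "LL y = Min (insert 1 ((\<lambda>g. gb g / 2) ` germs y))"

lemma germsD:
  assumes "(e,t0,\<sigma>) \<in> germs y"
  shows "e \<in> E" "0 \<le> t0" "t0 \<le> l e" "gamma e t0 = y" "(\<sigma> = 1 \<and> t0 < l e) \<or> (\<sigma> = -1 \<and> 0 < t0)"
  using assms unfolding germs_def by auto

lemma germs_finite: "finite (germs y)"
proof -
  obtain W where W: "open W" "y \<in> W" "finite {e\<in>E. gamma e ` {0..l e} \<inter> W \<noteq> {}}"
    using locfin[of y] by blast
  define EW where "EW = {e\<in>E. gamma e ` {0..l e} \<inter> W \<noteq> {}}"
  define T where "T e = {0, l e} \<union> (gamma e -` {y} \<inter> {0<..<l e})" for e
  have fT: "finite (T e)" if "e \<in> EW" for e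
  proof -
    have "e \<in> E" using that by (simp add: EW_def)
    then have "finite (gamma e -` {y} \<inter> {0<..<l e})"
      by (intro finite_vimage_IntI edge(3)) auto
    then show ?thesis by (simp add: T_def)
  qed
  have "germs y \<subseteq> (\<Union>e\<in>EW. \<Union>t0\<in>T e. {(e,t0,1),(e,t0,-1)})"
  proof
    fix g assume g: "g \<in> germs y"
    obtain e t0 \<sigma> where geq: "g = (e,t0,\<sigma>)" by (cases g) auto
    note gd = germsD[OF g[unfolded geq]]
    have "e \<in> EW" unfolding EW_def using gd W(2) by force
    moreover have "t0 \<in> T e" unfolding T_def using gd by auto
    moreover have "\<sigma> = 1 \<or> \<sigma> = -1" using gd by auto
    ultimately show "g \<in> (\<Union>e\<in>EW. \<Union>t0\<in>T e. {(e,t0,1),(e,t0,-1)})" using geq by blast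
  qed
  moreover have "finite (\<Union>e\<in>EW. \<Union>t0\<in>T e. {(e,t0,1),(e,t0,-1)})"
    using W(3) fT unfolding EW_def[symmetric] by (intro finite_UN_I) auto
  ultimately show ?thesis by (rule finite_subset)
qed

lemma gb_pos: "g \<in> germs y \<Longrightarrow> 0 < gb g"
proof -
  assume g: "g \<in> germs y"
  obtain e t0 \<sigma> where geq: "g = (e,t0,\<sigma>)" by (cases g) auto
  note gd = germsD[OF g[unfolded geq]]
  have "0 < l e" using edge(1)[OF gd(1)] .
  then show ?thesis unfolding gb_def geq by auto
qed

lemma LL_pos: "0 < LL y" and LL_le1: "LL y \<le> 1"
  and LL_le: "g \<in> germs y \<Longrightarrow> LL y \<le> gb g / 2"
proof -
  have fin: "finite (insert 1 ((\<lambda>g. gb g / 2) ` germs y))" using germs_finite by simp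
  show "0 < LL y" unfolding LL_def using fin gb_pos by (subst Min_gr_iff) auto
  show "LL y \<le> 1" unfolding LL_def using fin by (intro Min_le) auto
  show "g \<in> germs y \<Longrightarrow> LL y \<le> gb g / 2" unfolding LL_def using fin by (intro Min_le) auto
qed

lemma germ_param:
  assumes g: "(e,t0,\<sigma>) \<in> germs y" and u: "0 \<le> u" "u \<le> LL y"
  shows "0 \<le> t0 + \<sigma> * u" "t0 + \<sigma> * u \<le> l e" "0 < u \<Longrightarrow> 0 < t0 + \<sigma> * u \<and> t0 + \<sigma> * u < l e"
    "0 < u \<Longrightarrow> u < l e / 2"
proof -
  note gd = germsD[OF g]
  have le: "0 < l e" using edge(1)[OF gd(1)] .
  have L: "LL y \<le> gb (e,t0,\<sigma>) / 2" using LL_le[OF g] .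
  have A: "0 < t0 + \<sigma> * u \<and> t0 + \<sigma> * u < l e \<and> u < l e / 2" if "0 < u"
  proof (cases "0 < t0 \<and> t0 < l e")
    case True
    have "gb (e,t0,\<sigma>) = min t0 (l e - t0)" unfolding gb_def fst_conv snd_conv by (rule if_P[OF True])
    then have "u \<le> min t0 (l e - t0) / 2" using L u by simp
    then show ?thesis using gd(5) True that by auto
  next
    case False
    have "gb (e,t0,\<sigma>) = l e / 2" unfolding gb_def fst_conv snd_conv by (rule if_not_P[OF False])
    then have "u \<le> l e / 4" using L u by simp
    then show ?thesis using gd(2,3,5) False that le by auto
  qed
  show "0 < u \<Longrightarrow> 0 < t0 + \<sigma> * u \<and> t0 + \<sigma> * u < l e" using A by blast
  show "0 < u \<Longrightarrow> u < l e / 2" using A by blast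
  show "0 \<le> t0 + \<sigma> * u" using A gd(2) u by (cases "u = 0") auto
  show "t0 + \<sigma> * u \<le> l e" using A gd(3) u by (cases "u = 0") auto
qed

lemma bt0: "g \<in> germs y \<Longrightarrow> bt g 0 = y"
  unfolding bt_def germs_def by auto

lemma bt_eq: "bt (e,t0,\<sigma>) u = gamma e (t0 + \<sigma> * u)" unfolding bt_def by simp

lemma bt_notV: assumes "g \<in> germs y" "0 < u" "u \<le> LL y" shows "bt g u \<notin> V"
proof -
  obtain e t0 \<sigma> where geq: "g = (e,t0,\<sigma>)" by (cases g) auto
  show ?thesis using germ_param(3)[OF assms(1)[unfolded geq] _ assms(3)] assms(2)
      edge_notV[OF germsD(1)[OF assms(1)[unfolded geq]]] unfolding geq bt_eq by auto
qed

lemma bt_ne_y: assumes g: "g \<in> germs y" and u: "0 < u" "u \<le> LL y" shows "bt g u \<noteq> y"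
proof
  assume eq: "bt g u = y"
  obtain e t0 \<sigma> where geq: "g = (e,t0,\<sigma>)" by (cases g) auto
  note gd = germsD[OF g[unfolded geq]]
  have p: "0 < t0 + \<sigma> * u" "t0 + \<sigma> * u < l e" using germ_param(3)[OF g[unfolded geq] _ u(2)] u(1) by auto
  have "y \<notin> V" using bt_notV[OF g u] eq by simp
  then have t0i: "0 < t0" "t0 < l e" using gd edge(4,5)[OF gd(1)] by (auto simp: order.order_iff_strict)
  have "gamma e (t0 + \<sigma> * u) = gamma e t0" using eq gd(4) unfolding geq bt_eq by simp
  then have "t0 + \<sigma> * u = t0" using edge(3)[OF gd(1)] p t0i by (auto dest: inj_onD)
  then show False using gd(5) u(1) by auto
qed

lemma bt_inj:
  assumes g: "g \<in> germs y" and u: "0 \<le> u" "u \<le> LL y" and v: "0 \<le> v" "v \<le> LL y"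
    and eq: "bt g u = bt g v"
  shows "u = v"
proof -
  obtain e t0 \<sigma> where geq: "g = (e,t0,\<sigma>)" by (cases g) auto
  note gd = germsD[OF g[unfolded geq]]
  have s: "\<sigma> \<noteq> 0" using gd(5) by auto
  consider "u = 0" "v = 0" | "u = 0" "0 < v" | "0 < u" "v = 0" | "0 < u" "0 < v" using u v by linarith
  then show ?thesis
  proof cases
    case 2 then show ?thesis using bt_ne_y[OF g _ v(2)] eq bt0[OF g] by auto
  next
    case 3 then show ?thesis using bt_ne_y[OF g _ u(2)] eq bt0[OF g] by auto
  next
    case 4
    have pu: "t0 + \<sigma> * u \<in> {0<..<l e}" using germ_param(3)[OF g[unfolded geq] u] 4 by auto
    have pv: "t0 + \<sigma> * v \<in> {0<..<l e}" using germ_param(3)[OF g[unfolded geq] v] 4 by auto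
    have "t0 + \<sigma> * u = t0 + \<sigma> * v" using inj_onD[OF edge(3)[OF gd(1)] _ pu pv] eq unfolding geq bt_eq by simp
    then show ?thesis using s by simp
  qed simp
qed

lemma bt_disj:
  assumes g: "g \<in> germs y" and g': "g' \<in> germs y" and ne: "g \<noteq> g'"
    and u: "0 < u" "u \<le> LL y" and v: "0 < v" "v \<le> LL y"
  shows "bt g u \<noteq> bt g' v"
proof
  assume eq: "bt g u = bt g' v"
  obtain e t0 \<sigma> where geq: "g = (e,t0,\<sigma>)" by (cases g) auto
  obtain e' t0' \<sigma>' where geq': "g' = (e',t0',\<sigma>')" by (cases g') auto
  note gd = germsD[OF g[unfolded geq]] and gd' = germsD[OF g'[unfolded geq']]
  have pu: "0 < t0 + \<sigma> * u" "t0 + \<sigma> * u < l e" using germ_param(3)[OF g[unfolded geq] _ u(2)] u(1) by auto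
  have pv: "0 < t0' + \<sigma>' * v" "t0' + \<sigma>' * v < l e'" using germ_param(3)[OF g'[unfolded geq'] _ v(2)] v(1) by auto
  have hu: "u < l e / 2" using germ_param(4)[OF g[unfolded geq] _ u(2)] u(1) by auto
  have hv: "v < l e' / 2" using germ_param(4)[OF g'[unfolded geq'] _ v(2)] v(1) by auto
  have eq2: "gamma e (t0 + \<sigma> * u) = gamma e' (t0' + \<sigma>' * v)" using eq unfolding geq geq' bt_eq .
  have ee: "e = e'"
  proof (rule ccontr)
    assume "e \<noteq> e'"
    then show False using edge_disj[OF gd(1) gd'(1) _ pu pv] eq2 by blast
  qed
  have pp: "t0 + \<sigma> * u = t0' + \<sigma>' * v"
    using inj_onD[OF edge(3)[OF gd(1)] eq2[unfolded ee[symmetric]]] pu pv ee by auto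
  show False
  proof (cases "t0 = t0'")
    case True
    then have "\<sigma> \<noteq> \<sigma>'" using ne geq geq' ee by auto
    then show False using pp True gd(5) gd'(5) u(1) v(1) by auto
  next
    case False
    have y1: "gamma e t0 = gamma e t0'" using gd(4) gd'(4) ee by simp
    have "\<not> (0 < t0 \<and> t0 < l e)"
    proof
      assume i: "0 < t0 \<and> t0 < l e"
      then have "y \<notin> V" using edge_notV[OF gd(1)] gd(4) by auto
      then have "0 < t0' \<and> t0' < l e" using gd' ee edge(4,5)[OF gd(1)] by (auto simp: order.order_iff_strict)
      then show False using inj_onD[OF edge(3)[OF gd(1)] y1] i False by auto
    qed
    moreover have "\<not> (0 < t0' \<and> t0' < l e)"
    proof
      assume i: "0 < t0' \<and> t0' < l e"
      then have "y \<notin> V" using edge_notV[OF gd(1)] gd'(4) ee by auto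
      then have "0 < t0 \<and> t0 < l e" using gd edge(4,5)[OF gd(1)] by (auto simp: order.order_iff_strict)
      then show False using inj_onD[OF edge(3)[OF gd(1)] y1] i False by auto
    qed
    ultimately have "(t0 = 0 \<and> t0' = l e) \<or> (t0 = l e \<and> t0' = 0)"
      using gd(2,3) gd'(2,3) ee False by auto
    then show False
    proof
      assume a: "t0 = 0 \<and> t0' = l e"
      then have "\<sigma> = 1" "\<sigma>' = -1" using gd(5) gd'(5) ee by auto
      then show False using pp a hu hv ee by auto
    next
      assume a: "t0 = l e \<and> t0' = 0"
      then have "\<sigma> = -1" "\<sigma>' = 1" using gd(5) gd'(5) ee by auto
      then show False using pp a hu hv ee by auto
    qed
  qed
qed

lemma bt_dist:
  assumes g: "g \<in> germs y" and u: "0 \<le> u" "u \<le> LL y" and v: "0 \<le> v" "v \<le> LL y"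
  shows "dist (bt g u) (bt g v) \<le> \<bar>u - v\<bar>"
proof -
  obtain e t0 \<sigma> where geq: "g = (e,t0,\<sigma>)" by (cases g) auto
  note gd = germsD[OF g[unfolded geq]]
  have s: "\<bar>\<sigma>\<bar> = 1" using gd(5) by auto
  have pu: "0 \<le> t0 + \<sigma> * u" "t0 + \<sigma> * u \<le> l e" using germ_param[OF g[unfolded geq] u] by auto
  have pv: "0 \<le> t0 + \<sigma> * v" "t0 + \<sigma> * v \<le> l e" using germ_param[OF g[unfolded geq] v] by auto
  have "dist (gamma e (t0 + \<sigma> * u)) (gamma e (t0 + \<sigma> * v)) \<le> \<bar>(t0 + \<sigma> * u) - (t0 + \<sigma> * v)\<bar>"
  proof (cases "t0 + \<sigma> * u \<le> t0 + \<sigma> * v")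
    case True then show ?thesis using edge_dist[OF gd(1) pu(1) True pv(2)] by simp
  next
    case False then show ?thesis using edge_dist[OF gd(1) pv(1) _ pu(2)] by (simp add: dist_commute)
  qed
  also have "\<dots> = \<bar>\<sigma>\<bar> * \<bar>u - v\<bar>" by (simp add: abs_mult[symmetric] right_diff_distrib)
  also have "\<dots> = \<bar>u - v\<bar>" using s by simp
  finally show ?thesis unfolding geq bt_eq .
qed

lemma bt_cont: assumes g: "g \<in> germs y" shows "continuous_on {0..LL y} (bt g)"
  unfolding continuous_on_iff
proof (intro ballI allI impI)
  fix x \<epsilon> :: real assume x: "x \<in> {0..LL y}" and e: "0 < \<epsilon>"
  show "\<exists>\<delta>>0. \<forall>x'\<in>{0..LL y}. dist x' x < \<delta> \<longrightarrow> dist (bt g x') (bt g x) < \<epsilon>"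
  proof (intro exI[of _ \<epsilon>] conjI ballI impI e)
    fix x' assume x': "x' \<in> {0..LL y}" and d: "dist x' x < \<epsilon>"
    have "dist (bt g x') (bt g x) \<le> \<bar>x' - x\<bar>" using bt_dist[OF g] x x' by auto
    then show "dist (bt g x') (bt g x) < \<epsilon>" using d by (simp add: dist_real_def)
  qed
qed

lemma bt_compact:
  assumes g: "g \<in> germs y" and "0 \<le> a" "b \<le> LL y"
  shows "compact (bt g ` {a..b})"
  by (rule compact_continuous_image[OF continuous_on_subset[OF bt_cont[OF g]]]) (use assms in auto)

end


lemma sep_closed:
  fixes F :: "'a::metric_space set"
  assumes "closed F" "y \<notin> F"
  shows "\<exists>\<delta>>0. \<forall>z\<in>F. \<delta> \<le> dist y z"
proof (cases "F = {}")
  case False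
  have "infdist y F > 0" by (rule infdist_pos_not_in_closed[OF assms(1) False assms(2)])
  then show ?thesis using infdist_le[of _ F y] by blast
qed (auto intro: exI[of _ 1])

context mg
begin

lemma star: "\<exists>\<eta>>0. \<eta> \<le> LL y \<and> ball y \<eta> \<subseteq> insert y (\<Union>g\<in>germs y. bt g ` {0<..<LL y})"
proof -
  define L where "L = LL y"
  have L0: "0 < L" unfolding L_def by (rule LL_pos)
  obtain W where W: "open W" "y \<in> W" "finite (V \<inter> W)" "finite {e\<in>E. gamma e ` {0..l e} \<inter> W \<noteq> {}}"
    using locfin[of y] by blast
  define EW where "EW = {e\<in>E. gamma e ` {0..l e} \<inter> W \<noteq> {}}"
  define K where "K e = {0..l e} \<inter> (\<Inter>t0\<in>{t0\<in>{0..l e}. gamma e t0 = y}. {t. L \<le> \<bar>t - t0\<bar>})" for e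
  have Kc: "compact (K e)" for e
  proof -
    have "closed {t::real. L \<le> \<bar>t - t0\<bar>}" for t0
      using closed_Collect_le[of "\<lambda>t. L" "\<lambda>t. \<bar>t - t0\<bar>"] by (simp add: continuous_intros)
    then have "closed (\<Inter>t0\<in>{t0\<in>{0..l e}. gamma e t0 = y}. {t. L \<le> \<bar>t - t0\<bar>})"
      by (intro closed_INT) blast
    then show ?thesis unfolding K_def by (rule compact_Int_closed[OF compact_Icc])
  qed
  have KF: "compact (gamma e ` K e)" if "e \<in> E" for e
    by (rule compact_continuous_image[OF continuous_on_subset[OF edge(2)[OF that]] Kc])
       (auto simp: K_def)
  define F where "F = ((V \<inter> W) - {y}) \<union> (\<Union>e\<in>EW. gamma e ` K e)"
  have Fc: "compact F" unfolding F_def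
  proof (rule compact_Un)
    show "compact (V \<inter> W - {y})" using W(3) by (intro finite_imp_compact) simp
    show "compact (\<Union>e\<in>EW. gamma e ` K e)"
      using W(4) KF unfolding EW_def[symmetric] by (intro compact_UN) (auto simp: EW_def)
  qed
  have yF: "y \<notin> F"
  proof
    assume "y \<in> F"
    then obtain e where e: "e \<in> EW" "y \<in> gamma e ` K e" unfolding F_def by blast
    then obtain t where t: "t \<in> K e" "y = gamma e t" by (auto simp: image_iff)
    then have "t \<in> {0..l e}" by (simp add: K_def)
    then have "L \<le> \<bar>t - t\<bar>" using t unfolding K_def by blast
    then show False using L0 by simp
  qed
  obtain \<eta>0 where e0: "\<eta>0 > 0" "\<forall>z\<in>F. \<eta>0 \<le> dist y z"
    using sep_closed[OF compact_imp_closed[OF Fc] yF] by blast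
  obtain \<eta>1 where e1: "\<eta>1 > 0" "ball y \<eta>1 \<subseteq> W" using W(1,2) open_contains_ball by blast
  define \<eta> where "\<eta> = min (min \<eta>0 \<eta>1) L"
  have "ball y \<eta> \<subseteq> insert y (\<Union>g\<in>germs y. bt g ` {0<..<L})"
  proof
    fix z assume z: "z \<in> ball y \<eta>"
    show "z \<in> insert y (\<Union>g\<in>germs y. bt g ` {0<..<L})"
    proof (cases "z = y")
      case False
      have zW: "z \<in> W" using z e1 unfolding \<eta>_def by auto
      have zd: "dist y z < \<eta>0" using z unfolding \<eta>_def by simp
      have zF: "z \<notin> F" using zd e0(2) by force
      from cover[of z] show ?thesis
      proof
        assume "z \<in> V"
        then have "z \<in> F" unfolding F_def using zW False by blast
        then show ?thesis using zF by blast
      next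
        assume "\<exists>e\<in>E. \<exists>t. 0 \<le> t \<and> t \<le> l e \<and> z = gamma e t"
        then obtain e t where et: "e \<in> E" "0 \<le> t" "t \<le> l e" "z = gamma e t" by blast
        have "z \<in> gamma e ` {0..l e}" using et by auto
        then have eEW: "e \<in> EW" unfolding EW_def using et(1) zW by blast
        have "t \<notin> K e"
        proof
          assume "t \<in> K e"
          then have "z \<in> gamma e ` K e" using et(4) by blast
          then have "z \<in> F" unfolding F_def using eEW by blast
          then show False using zF by blast
        qed
        then obtain t0 where t0: "t0 \<in> {0..l e}" "gamma e t0 = y" "\<not> L \<le> \<bar>t - t0\<bar>"
          using et unfolding K_def by auto
        have tt0: "t \<noteq> t0" using t0(2) et(4) False by auto
        show ?thesis
        proof (cases "t0 < t")
          case True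
          have g: "(e,t0,1) \<in> germs y" unfolding germs_def using t0 et True by auto
          have "z = bt (e,t0,1) (t - t0)" unfolding bt_eq using et by simp
          moreover have "t - t0 \<in> {0<..<L}" using True t0(3) by auto
          ultimately show ?thesis using g by blast
        next
          case False
          then have lt: "t < t0" using tt0 by simp
          have g: "(e,t0,-1) \<in> germs y" unfolding germs_def using t0 et lt by auto
          have "z = bt (e,t0,-1) (t0 - t)" unfolding bt_eq using et by simp
          moreover have "t0 - t \<in> {0<..<L}" using lt t0(3) by auto
          ultimately show ?thesis using g by blast
        qed
      qed
    qed simp
  qed
  moreover have "0 < \<eta>" unfolding \<eta>_def using e0 e1 L0 by simp
  moreover have "\<eta> \<le> L" unfolding \<eta>_def by simp
  ultimately show ?thesis unfolding L_def by blast
qed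

definition eta :: "'a \<Rightarrow> real" where
  "eta y = (SOME \<eta>. 0 < \<eta> \<and> \<eta> \<le> LL y \<and> ball y \<eta> \<subseteq> insert y (\<Union>g\<in>germs y. bt g ` {0<..<LL y}))"

lemma eta: "0 < eta y" "eta y \<le> LL y" "ball y (eta y) \<subseteq> insert y (\<Union>g\<in>germs y. bt g ` {0<..<LL y})"
proof -
  have "0 < eta y \<and> eta y \<le> LL y \<and> ball y (eta y) \<subseteq> insert y (\<Union>g\<in>germs y. bt g ` {0<..<LL y})"
    unfolding eta_def using someI_ex[OF star[of y]] by blast
  then show "0 < eta y" "eta y \<le> LL y" "ball y (eta y) \<subseteq> insert y (\<Union>g\<in>germs y. bt g ` {0<..<LL y})"
    by auto
qed

lemma in_ball_eta:
  assumes "z \<in> ball y (eta y)" "z \<noteq> y"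
  obtains g u where "g \<in> germs y" "0 < u" "u < LL y" "z = bt g u"
proof -
  have "z \<in> (\<Union>g\<in>germs y. bt g ` {0<..<LL y})" using eta(3) assms by blast
  then obtain g where g: "g \<in> germs y" "z \<in> bt g ` {0<..<LL y}" by blast
  then obtain u where u: "u \<in> {0<..<LL y}" "z = bt g u" by (auto simp: image_iff)
  show ?thesis by (rule that[of g u]) (use u g(1) in auto)
qed

definition Bset :: "'a \<Rightarrow> nat \<times> real \<times> real \<Rightarrow> 'a set" where
  "Bset y g = bt g ` {0<..<LL y} \<inter> ball y (eta y)"

lemma Bset_eq:
  assumes g: "g \<in> germs y"
  shows "Bset y g = (ball y (eta y) - {y}) - (\<Union>g'\<in>germs y - {g}. bt g' ` {0..LL y})"
proof
  show "Bset y g \<subseteq> (ball y (eta y) - {y}) - (\<Union>g'\<in>germs y - {g}. bt g' ` {0..LL y})"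
  proof
    fix w assume w: "w \<in> Bset y g"
    then obtain u where u: "0 < u" "u < LL y" "w = bt g u" unfolding Bset_def by (auto simp: image_iff)
    have wb: "w \<in> ball y (eta y)" using w unfolding Bset_def by blast
    have wy: "w \<noteq> y" using bt_ne_y[OF g u(1)] u by simp
    have "w \<notin> bt g' ` {0..LL y}" if g': "g' \<in> germs y - {g}" for g'
    proof
      assume "w \<in> bt g' ` {0..LL y}"
      then obtain v where v: "0 \<le> v" "v \<le> LL y" "w = bt g' v" by (auto simp: image_iff)
      show False
      proof (cases "v = 0")
        case True then show False using v wy bt0[of g' y] g' by simp
      next
        case False
        have g'': "g' \<in> germs y" "g \<noteq> g'" using g' by auto
        have "bt g u \<noteq> bt g' v" by (rule bt_disj[OF g g''(1) g''(2) u(1)]) (use u v False in auto)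
        then show False using u v by simp
      qed
    qed
    then show "w \<in> (ball y (eta y) - {y}) - (\<Union>g'\<in>germs y - {g}. bt g' ` {0..LL y})"
      using wb wy by blast
  qed
next
  show "(ball y (eta y) - {y}) - (\<Union>g'\<in>germs y - {g}. bt g' ` {0..LL y}) \<subseteq> Bset y g"
  proof
    fix w assume w: "w \<in> (ball y (eta y) - {y}) - (\<Union>g'\<in>germs y - {g}. bt g' ` {0..LL y})"
    then have wb: "w \<in> ball y (eta y)" "w \<noteq> y" by auto
    obtain g'' u where gu: "g'' \<in> germs y" "0 < u" "u < LL y" "w = bt g'' u"
      using in_ball_eta[OF wb] by blast
    have "g'' = g"
    proof (rule ccontr)
      assume "g'' \<noteq> g"
      moreover have "w \<in> bt g'' ` {0..LL y}" using gu by auto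
      ultimately have "w \<in> (\<Union>g'\<in>germs y - {g}. bt g' ` {0..LL y})" using gu(1) by (intro UN_I[of g'']) auto
      then show False using w by blast
    qed
    then show "w \<in> Bset y g" unfolding Bset_def using gu wb by auto
  qed
qed

lemma Bset_open: "g \<in> germs y \<Longrightarrow> open (Bset y g)"
  unfolding Bset_eq
  by (intro open_Diff open_delete open_ball closed_UN ballI compact_imp_closed bt_compact)
     (auto intro: finite_Diff germs_finite)

lemma Bset_disj: "g \<in> germs y \<Longrightarrow> g' \<in> germs y \<Longrightarrow> g \<noteq> g' \<Longrightarrow> Bset y g \<inter> Bset y g' = {}"
proof -
  assume g: "g \<in> germs y" and g': "g' \<in> germs y" and ne: "g \<noteq> g'"
  have "w \<notin> Bset y g'" if w: "w \<in> Bset y g" for w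
  proof
    assume "w \<in> Bset y g'"
    then obtain v where v: "0 < v" "v < LL y" "w = bt g' v" unfolding Bset_def by (auto simp: image_iff)
    obtain u where u: "0 < u" "u < LL y" "w = bt g u" using w unfolding Bset_def by (auto simp: image_iff)
    show False using bt_disj[OF g g' ne u(1) _ v(1)] u v by simp
  qed
  then show ?thesis by blast
qed

lemma ball_Bset: "ball y (eta y) - {y} \<subseteq> (\<Union>g\<in>germs y. Bset y g)"
proof
  fix w assume "w \<in> ball y (eta y) - {y}"
  then have wb: "w \<in> ball y (eta y)" "w \<noteq> y" by auto
  obtain g u where gu: "g \<in> germs y" "0 < u" "u < LL y" "w = bt g u"
    using in_ball_eta[OF wb] by blast
  then have "w \<in> Bset y g" unfolding Bset_def using wb by auto
  then show "w \<in> (\<Union>g\<in>germs y. Bset y g)" using gu by blast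
qed

lemma Bset_sub: "Bset y g \<subseteq> bt g ` {0..LL y}"
  unfolding Bset_def by auto

lemma Bset_ne_y: "g \<in> germs y \<Longrightarrow> y \<notin> Bset y g"
  using Bset_eq by blast

lemma dist_y_bt: "g \<in> germs y \<Longrightarrow> 0 \<le> t \<Longrightarrow> t \<le> LL y \<Longrightarrow> dist y (bt g t) \<le> t"
  using bt_dist[of g y 0 t] bt0[of g y] by (simp add: LL_pos less_imp_le)

lemma bt_in_Bset: "g \<in> germs y \<Longrightarrow> 0 < u \<Longrightarrow> u < LL y \<Longrightarrow> bt g u \<in> ball y (eta y) \<Longrightarrow> bt g u \<in> Bset y g"
  unfolding Bset_def by auto

lemma conn_branch:
  assumes g: "g \<in> germs y" and S: "connected S" "S \<subseteq> ball y (eta y) - {y}" and z: "z \<in> S" "z \<in> Bset y g"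
  shows "S \<subseteq> Bset y g"
proof -
  define B where "B = (\<Union>g'\<in>germs y - {g}. Bset y g')"
  have oA: "open (Bset y g)" using Bset_open[OF g] .
  have oB: "open B" unfolding B_def by (intro open_UN ballI Bset_open) blast
  have dAB: "Bset y g \<inter> B \<inter> S = {}" unfolding B_def using Bset_disj[OF g] by blast
  have SAB: "S \<subseteq> Bset y g \<union> B" unfolding B_def using S(2) ball_Bset by blast
  have "Bset y g \<inter> S = {} \<or> B \<inter> S = {}" by (rule connectedD[OF S(1) oA oB dAB SAB])
  then show ?thesis using z SAB by blast
qed

lemma BR0:
  assumes g: "g \<in> germs y" and s: "0 \<le> s" "s \<le> LL y" and t: "0 \<le> t" "t \<le> LL y"
    and cd: "c \<le> d" and hc: "continuous_on {c..d} h" and hs: "h ` {c..d} \<subseteq> bt g ` {0..LL y}"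
    and h1: "h c = bt g s" and h2: "h d = bt g t"
  shows "ennreal \<bar>t - s\<bar> \<le> curve_length h c d"
proof -
  obtain e t0 \<sigma> where geq: "g = (e,t0,\<sigma>)" by (cases g) auto
  note gd = germsD[OF g[unfolded geq]]
  define L where "L = LL y"
  define a where "a = min t0 (t0 + \<sigma> * L)"
  define b where "b = max t0 (t0 + \<sigma> * L)"
  have sg: "\<sigma> = 1 \<or> \<sigma> = -1" using gd(5) by auto
  have L0: "0 \<le> L" using LL_pos[of y] unfolding L_def by simp
  have ab0: "0 \<le> a" "b \<le> l e" "a \<le> b"
    using germ_param(1,2)[OF g[unfolded geq] order_refl LL_pos[THEN less_imp_le]]
      germ_param(1,2)[OF g[unfolded geq] LL_pos[THEN less_imp_le] order_refl] gd(2,3)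
    unfolding a_def b_def L_def by auto
  have pin: "t0 + \<sigma> * u \<in> {a..b}" if "0 \<le> u" "u \<le> L" for u
    using sg that unfolding a_def b_def by (auto simp: min_def max_def)
  have pinv: "\<sigma> * (p - t0) \<in> {0..L} \<and> t0 + \<sigma> * (\<sigma> * (p - t0)) = p" if "p \<in> {a..b}" for p
    using sg that L0 unfolding a_def b_def by (auto simp: min_def max_def split: if_splits)
  have sub: "bt g ` {0..LL y} \<subseteq> gamma e ` {a..b}"
  proof
    fix w assume "w \<in> bt g ` {0..LL y}"
    then obtain u where "u \<in> {0..L}" "w = bt g u" unfolding L_def by (auto simp: image_iff)
    then show "w \<in> gamma e ` {a..b}" using pin unfolding geq bt_eq by auto
  qed
  have gc: "continuous_on {a..b} (gamma e)"
    by (rule continuous_on_subset[OF edge(2)[OF gd(1)]]) (use ab0 in auto)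
  have gi: "inj_on (gamma e) {a..b}"
  proof (rule inj_onI)
    fix p q assume p: "p \<in> {a..b}" and q: "q \<in> {a..b}" and eq: "gamma e p = gamma e q"
    have "bt g (\<sigma> * (p - t0)) = bt g (\<sigma> * (q - t0))"
      using pinv[OF p] pinv[OF q] eq unfolding geq bt_eq by simp
    moreover have u1: "0 \<le> \<sigma> * (p - t0)" "\<sigma> * (p - t0) \<le> LL y" using pinv[OF p] unfolding L_def by auto
    moreover have v1: "0 \<le> \<sigma> * (q - t0)" "\<sigma> * (q - t0) \<le> LL y" using pinv[OF q] unfolding L_def by auto
    ultimately have "\<sigma> * (p - t0) = \<sigma> * (q - t0)"
      using bt_inj[OF g u1 v1] by blast
    then show "p = q" using sg by auto
  qed
  have gl: "curve_length (gamma e) p q = ennreal (q - p)" if "a \<le> p" "p \<le> q" "q \<le> b" for p q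
    using edge(6)[OF gd(1)] that ab0 by auto
  have "ennreal \<bar>(t0 + \<sigma> * t) - (t0 + \<sigma> * s)\<bar> \<le> curve_length h c d"
    by (rule arc_lb[OF ab0(3) gc gi gl cd hc order_trans[OF hs sub]])
       (use pin s t h1 h2 in \<open>auto simp: geq bt_eq L_def\<close>)
  moreover have "\<bar>(t0 + \<sigma> * t) - (t0 + \<sigma> * s)\<bar> = \<bar>t - s\<bar>" using sg by auto
  ultimately show ?thesis by simp
qed

lemma img_branch:
  assumes g: "g \<in> germs y" and T: "connected T" and hc: "continuous_on T h"
    and hT: "h ` T \<subseteq> ball y (eta y) - {y}" and u0: "uu \<in> T" "h uu \<in> Bset y g"
  shows "h ` T \<subseteq> Bset y g"
  by (rule conn_branch[OF g connected_continuous_image[OF hc T] hT]) (use u0 in auto)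

end


context mg
begin

lemma ennreal_le_trans: "ennreal a \<le> X \<Longrightarrow> b \<le> a \<Longrightarrow> ennreal b \<le> X"
  by (rule order_trans[OF ennreal_leI])

lemma leave_ball:
  assumes hc: "continuous_on {0..1} h" and h0: "h 0 = p" and dp: "dist y p \<le> s"
    and \<tau>: "\<tau> \<in> {0..1}" "h \<tau> \<notin> ball y r"
  shows "ennreal (r - s) \<le> curve_length h 0 1"
proof -
  have "ennreal (dist (h 0) (h \<tau>)) \<le> curve_length h 0 1" using \<tau> by (intro dist_le_cl) auto
  moreover have "r - s \<le> dist (h 0) (h \<tau>)"
  proof -
    have "r \<le> dist y (h \<tau>)" using \<tau>(2) by simp
    also have "\<dots> \<le> dist y (h 0) + dist (h 0) (h \<tau>)" by (rule dist_triangle)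
    finally show ?thesis using h0 dp by simp
  qed
  ultimately show ?thesis by (rule ennreal_le_trans)
qed

lemma D1:
  assumes g: "g \<in> germs y" and t: "0 < t" "t < LL y"
  shows "min t (eta y) \<le> dist y (bt g t)"
proof (rule dist_lb)
  fix h :: "real \<Rightarrow> 'a" assume hc: "continuous_on {0..1} h" and h0: "h 0 = y" and h1: "h 1 = bt g t"
  show "ennreal (min t (eta y)) \<le> curve_length h 0 1"
  proof (cases "h ` {0..1} \<subseteq> ball y (eta y)")
    case False
    then obtain \<tau> where \<tau>: "\<tau> \<in> {0..1}" "h \<tau> \<notin> ball y (eta y)"
      unfolding image_subset_iff by blast
    have "ennreal (eta y - 0) \<le> curve_length h 0 1" by (rule leave_ball[OF hc h0 _ \<tau>]) simp
    then show ?thesis by (rule ennreal_le_trans) simp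
  next
    case True
    define Z where "Z = {\<tau> \<in> {0..1}. h \<tau> = y}"
    have Zc: "closed Z" unfolding Z_def by (rule continuous_closed_preimage_constant[OF hc closed_atLeastAtMost])
    have Z0: "0 \<in> Z" using h0 by (simp add: Z_def)
    have Zb: "bdd_above Z" unfolding Z_def bdd_above_def by auto
    define \<tau>2 where "\<tau>2 = Sup Z"
    have \<tau>Z: "\<tau>2 \<in> Z" unfolding \<tau>2_def by (rule closed_contains_Sup) (use Z0 Zb Zc in auto)
    have \<tau>: "0 \<le> \<tau>2" "\<tau>2 \<le> 1" "h \<tau>2 = y" using \<tau>Z by (auto simp: Z_def)
    have hy1: "h 1 \<noteq> y" using bt_ne_y[OF g t(1)] t(2) h1 by simp
    have \<tau>lt: "\<tau>2 < 1" using \<tau> hy1 by (cases "\<tau>2 = 1") auto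
    have nz: "h s \<noteq> y" if "s \<in> {\<tau>2<..1}" for s
    proof
      assume "h s = y"
      then have "s \<in> Z" using that \<tau> by (auto simp: Z_def)
      then have "s \<le> \<tau>2" unfolding \<tau>2_def by (rule cSup_upper) (rule Zb)
      then show False using that by simp
    qed
    have hT: "h ` {\<tau>2<..1} \<subseteq> ball y (eta y) - {y}" using True nz \<tau> by auto
    have "h 1 \<in> ball y (eta y)" by (rule subsetD[OF True imageI]) simp
    then have hB1: "h 1 \<in> Bset y g"
      using bt_in_Bset[OF g t] h1 by simp
    have img: "h ` {\<tau>2<..1} \<subseteq> Bset y g"
      by (rule img_branch[OF g connected_Ioc continuous_on_subset[OF hc] hT, of 1])
         (use \<tau> \<tau>lt hB1 in auto)
    have sub: "h ` {\<tau>2..1} \<subseteq> bt g ` {0..LL y}"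
    proof
      fix w assume "w \<in> h ` {\<tau>2..1}"
      then obtain s where s: "s \<in> {\<tau>2..1}" "w = h s" by blast
      show "w \<in> bt g ` {0..LL y}"
      proof (cases "s = \<tau>2")
        case True
        then have "w = bt g 0" using s \<tau> bt0[OF g] by simp
        then show ?thesis using LL_pos[of y] by auto
      next
        case False
        then have "s \<in> {\<tau>2<..1}" using s by auto
        then show ?thesis using img Bset_sub s by blast
      qed
    qed
    have "ennreal \<bar>t - 0\<bar> \<le> curve_length h \<tau>2 1"
      by (rule BR0[OF g _ _ _ _ _ continuous_on_subset[OF hc] sub])
         (use \<tau> t h1 bt0[OF g] LL_pos[of y] in auto)
    also have "\<dots> \<le> curve_length h 0 1" by (rule cl_mono) (use \<tau> in auto)
    finally show ?thesis by (rule ennreal_le_trans) (use t in simp)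
  qed
qed

lemma D2:
  assumes g: "g \<in> germs y" and g': "g' \<in> germs y" and ne: "g \<noteq> g'"
    and s: "0 < s" "s < LL y" and t: "0 < t" "t < LL y"
  shows "min (s + t) (eta y - s) \<le> dist (bt g s) (bt g' t)"
proof (rule dist_lb)
  fix h :: "real \<Rightarrow> 'a" assume hc: "continuous_on {0..1} h" and h0: "h 0 = bt g s" and h1: "h 1 = bt g' t"
  show "ennreal (min (s + t) (eta y - s)) \<le> curve_length h 0 1"
  proof (cases "h ` {0..1} \<subseteq> ball y (eta y)")
    case False
    then obtain \<tau> where \<tau>: "\<tau> \<in> {0..1}" "h \<tau> \<notin> ball y (eta y)"
      unfolding image_subset_iff by blast
    have "ennreal (eta y - s) \<le> curve_length h 0 1"
      by (rule leave_ball[OF hc h0 _ \<tau>]) (rule dist_y_bt[OF g], use s in auto)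
    then show ?thesis by (rule ennreal_le_trans) simp
  next
    case True
    define Z where "Z = {\<tau> \<in> {0..1}. h \<tau> = y}"
    have Zc: "closed Z" unfolding Z_def by (rule continuous_closed_preimage_constant[OF hc closed_atLeastAtMost])
    have Zb: "bdd_above Z" "bdd_below Z" unfolding Z_def bdd_above_def bdd_below_def by auto
    have hy0: "h 0 \<noteq> y" using bt_ne_y[OF g s(1)] s(2) h0 by simp
    have hy1: "h 1 \<noteq> y" using bt_ne_y[OF g' t(1)] t(2) h1 by simp
    have "h 0 \<in> ball y (eta y)" by (rule subsetD[OF True imageI]) simp
    then have hB0: "h 0 \<in> Bset y g" using bt_in_Bset[OF g s] h0 by simp
    have "h 1 \<in> ball y (eta y)" by (rule subsetD[OF True imageI]) simp
    then have hB1: "h 1 \<in> Bset y g'" using bt_in_Bset[OF g' t] h1 by simp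
    have Zne: "Z \<noteq> {}"
    proof
      assume Z: "Z = {}"
      have hT: "h ` {0..1} \<subseteq> ball y (eta y) - {y}" using True Z unfolding Z_def by auto
      have "h ` {0..1} \<subseteq> Bset y g"
        by (rule img_branch[OF g connected_Icc hc hT, of 0]) (use hB0 in auto)
      then have "h 1 \<in> Bset y g" by auto
      then show False using hB1 Bset_disj[OF g g' ne] by blast
    qed
    define \<tau>1 where "\<tau>1 = Inf Z"
    define \<tau>2 where "\<tau>2 = Sup Z"
    have \<tau>1Z: "\<tau>1 \<in> Z" unfolding \<tau>1_def by (rule closed_contains_Inf) (use Zne Zb Zc in auto)
    have \<tau>2Z: "\<tau>2 \<in> Z" unfolding \<tau>2_def by (rule closed_contains_Sup) (use Zne Zb Zc in auto)
    have \<tau>1: "0 \<le> \<tau>1" "\<tau>1 \<le> 1" "h \<tau>1 = y" using \<tau>1Z by (auto simp: Z_def)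
    have \<tau>2: "0 \<le> \<tau>2" "\<tau>2 \<le> 1" "h \<tau>2 = y" using \<tau>2Z by (auto simp: Z_def)
    have \<tau>12: "\<tau>1 \<le> \<tau>2" unfolding \<tau>1_def \<tau>2_def by (rule cInf_le_cSup[OF Zne Zb(1) Zb(2)])
    have \<tau>1p: "0 < \<tau>1" using \<tau>1 hy0 by (cases "\<tau>1 = 0") auto
    have \<tau>2lt: "\<tau>2 < 1" using \<tau>2 hy1 by (cases "\<tau>2 = 1") auto
    have nz1: "h u \<noteq> y" if "u \<in> {0..<\<tau>1}" for u
    proof
      assume "h u = y"
      then have "u \<in> Z" using that \<tau>1 by (auto simp: Z_def)
      then have "\<tau>1 \<le> u" unfolding \<tau>1_def by (rule cInf_lower) (rule Zb)
      then show False using that by simp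
    qed
    have nz2: "h u \<noteq> y" if "u \<in> {\<tau>2<..1}" for u
    proof
      assume "h u = y"
      then have "u \<in> Z" using that \<tau>2 by (auto simp: Z_def)
      then have "u \<le> \<tau>2" unfolding \<tau>2_def by (rule cSup_upper) (rule Zb)
      then show False using that by simp
    qed
    have img1: "h ` {0..<\<tau>1} \<subseteq> Bset y g"
      by (rule img_branch[OF g connected_Ico[of 0 \<tau>1] continuous_on_subset[OF hc], where uu=0])
         (use True nz1 \<tau>1 \<tau>1p hB0 in auto)
    have img2: "h ` {\<tau>2<..1} \<subseteq> Bset y g'"
      by (rule img_branch[OF g' connected_Ioc[of \<tau>2 1] continuous_on_subset[OF hc], where uu=1])
         (use True nz2 \<tau>2 \<tau>2lt hB1 in auto)
    have sub1: "h ` {0..\<tau>1} \<subseteq> bt g ` {0..LL y}"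
    proof
      fix w assume "w \<in> h ` {0..\<tau>1}"
      then obtain u where u: "u \<in> {0..\<tau>1}" "w = h u" by blast
      show "w \<in> bt g ` {0..LL y}"
      proof (cases "u = \<tau>1")
        case True
        then have "w = bt g 0" using u \<tau>1 bt0[OF g] by simp
        then show ?thesis using LL_pos[of y] by auto
      next
        case False
        then have "u \<in> {0..<\<tau>1}" using u by auto
        then show ?thesis using img1 Bset_sub u by blast
      qed
    qed
    have sub2: "h ` {\<tau>2..1} \<subseteq> bt g' ` {0..LL y}"
    proof
      fix w assume "w \<in> h ` {\<tau>2..1}"
      then obtain u where u: "u \<in> {\<tau>2..1}" "w = h u" by blast
      show "w \<in> bt g' ` {0..LL y}"
      proof (cases "u = \<tau>2")
        case True
        then have "w = bt g' 0" using u \<tau>2 bt0[OF g'] by simp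
        then show ?thesis using LL_pos[of y] by auto
      next
        case False
        then have "u \<in> {\<tau>2<..1}" using u by auto
        then show ?thesis using img2 Bset_sub u by blast
      qed
    qed
    have c1: "ennreal \<bar>0 - s\<bar> \<le> curve_length h 0 \<tau>1"
      by (rule BR0[OF g _ _ _ _ _ continuous_on_subset[OF hc] sub1])
         (use \<tau>1 s h0 bt0[OF g] LL_pos[of y] in auto)
    have c2: "ennreal \<bar>t - 0\<bar> \<le> curve_length h \<tau>2 1"
      by (rule BR0[OF g' _ _ _ _ _ continuous_on_subset[OF hc] sub2])
         (use \<tau>2 t h1 bt0[OF g'] LL_pos[of y] in auto)
    have "ennreal (s + t) = ennreal s + ennreal t" using s t by (simp add: ennreal_plus)
    also have "\<dots> \<le> curve_length h 0 \<tau>1 + curve_length h \<tau>2 1" using c1 c2 s t by (intro add_mono) auto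
    also have "\<dots> \<le> curve_length h 0 \<tau>1 + curve_length h \<tau>1 1"
      by (intro add_mono order_refl cl_mono) (use \<tau>12 \<tau>2 in auto)
    also have "\<dots> \<le> curve_length h 0 1" by (rule cl_superadd) (use \<tau>1 in auto)
    finally show ?thesis by (rule ennreal_le_trans) simp
  qed
qed

lemma dist_bt_eq:
  assumes g: "g \<in> germs y" and t: "0 \<le> t" "t < eta y"
  shows "dist y (bt g t) = t"
proof (cases "t = 0")
  case True then show ?thesis using bt0[OF g] by simp
next
  case False
  have tl: "t < LL y" using t eta(2)[of y] by simp
  have "min t (eta y) \<le> dist y (bt g t)" using D1[OF g _ tl] False t by simp
  moreover have "dist y (bt g t) \<le> t" using dist_y_bt[OF g t(1)] tl by simp
  ultimately show ?thesis using t by simp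
qed

lemma dist_bt_bt_eq:
  assumes g: "g \<in> germs y" and g': "g' \<in> germs y" and ne: "g \<noteq> g'"
    and s: "0 < s" and t: "0 < t" and st: "2 * s + t \<le> eta y"
  shows "dist (bt g s) (bt g' t) = s + t"
proof -
  have sl: "s < LL y" "t < LL y" using s t st eta(2)[of y] by auto
  have "min (s + t) (eta y - s) \<le> dist (bt g s) (bt g' t)" by (rule D2[OF g g' ne s sl(1) t sl(2)])
  moreover have "dist (bt g s) (bt g' t) \<le> s + t"
  proof -
    have "dist (bt g s) (bt g' t) \<le> dist (bt g s) y + dist y (bt g' t)" by (rule dist_triangle)
    also have "\<dots> \<le> s + t" using dist_y_bt[OF g _ ] dist_y_bt[OF g'] s t sl
      by (simp add: dist_commute add_mono less_imp_le)
    finally show ?thesis .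
  qed
  ultimately show ?thesis using st by simp
qed

lemma ball_star:
  assumes d: "0 < \<delta>" "\<delta> \<le> eta y"
  shows "ball y \<delta> = insert y (\<Union>g\<in>germs y. bt g ` {0<..<\<delta>})"
proof
  show "ball y \<delta> \<subseteq> insert y (\<Union>g\<in>germs y. bt g ` {0<..<\<delta>})"
  proof
    fix z assume z: "z \<in> ball y \<delta>"
    show "z \<in> insert y (\<Union>g\<in>germs y. bt g ` {0<..<\<delta>})"
    proof (cases "z = y")
      case False
      have "z \<in> ball y (eta y)" using z d by auto
      then obtain g u where gu: "g \<in> germs y" "0 < u" "u < LL y" "z = bt g u"
        using in_ball_eta False by blast
      have "min u (eta y) \<le> dist y z" using D1[OF gu(1-3)] gu(4) by simp
      then have "u < \<delta>" using z d by (auto simp: min_def split: if_splits)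
      then have "z \<in> bt g ` {0<..<\<delta>}" using gu by auto
      then show ?thesis using gu(1) by blast
    qed simp
  qed
next
  show "insert y (\<Union>g\<in>germs y. bt g ` {0<..<\<delta>}) \<subseteq> ball y \<delta>"
  proof
    fix z assume "z \<in> insert y (\<Union>g\<in>germs y. bt g ` {0<..<\<delta>})"
    then consider "z = y" | g u where "g \<in> germs y" "0 < u" "u < \<delta>" "z = bt g u" by auto
    then show "z \<in> ball y \<delta>"
    proof cases
      case 1 then show ?thesis using d by simp
    next
      case 2
      have "u < LL y" using 2 d eta(2)[of y] by simp
      then have "dist y z \<le> u" using dist_y_bt[OF 2(1)] 2 by simp
      then show ?thesis using 2 by simp
    qed
  qed
qed

end


context mg
begin

lemma seg_open:
  assumes g: "g \<in> germs y" and p: "0 < p1" "p1 < p2" "p2 < eta y"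
  shows "bt g ` {p1<..<p2} = ball y p2 \<inter> (- cball y p1) \<inter> Bset y g"
proof
  show "bt g ` {p1<..<p2} \<subseteq> ball y p2 \<inter> (- cball y p1) \<inter> Bset y g"
  proof
    fix w assume "w \<in> bt g ` {p1<..<p2}"
    then obtain u where u: "p1 < u" "u < p2" "w = bt g u" by (auto simp: image_iff)
    have d: "dist y w = u" using dist_bt_eq[OF g] u p by simp
    have "u < LL y" using u p eta(2)[of y] by simp
    moreover have "w \<in> ball y (eta y)" using d u p by simp
    ultimately have "w \<in> Bset y g" using bt_in_Bset[OF g] u p by simp
    then show "w \<in> ball y p2 \<inter> (- cball y p1) \<inter> Bset y g" using d u by simp
  qed
next
  show "ball y p2 \<inter> (- cball y p1) \<inter> Bset y g \<subseteq> bt g ` {p1<..<p2}"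
  proof
    fix w assume w: "w \<in> ball y p2 \<inter> (- cball y p1) \<inter> Bset y g"
    then obtain u where u: "0 < u" "u < LL y" "w = bt g u" unfolding Bset_def by (auto simp: image_iff)
    have dw: "p1 < dist y w" "dist y w < p2" using w by auto
    have "min u (eta y) \<le> dist y w" using D1[OF g u(1,2)] u(3) by simp
    then have "u \<le> dist y w" using dw p by (auto simp: min_def split: if_splits)
    moreover have "dist y w \<le> u" using dist_y_bt[OF g] u by simp
    ultimately have "dist y w = u" by simp
    then show "w \<in> bt g ` {p1<..<p2}" using dw u by auto
  qed
qed

lemma no_sandwich:
  assumes U: "connected U" "y \<in> U" and g: "g \<in> germs y"
    and p: "0 < p1" "p1 < q" "q < p2" "p2 < eta y"
    and n1: "bt g p1 \<notin> U" and qU: "bt g q \<in> U" and n2: "bt g p2 \<notin> U"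
  shows False
proof -
  define A where "A = U \<inter> bt g ` {p1<..<p2}"
  have eqs: "bt g ` {p1<..<p2} = ball y p2 \<inter> (- cball y p1) \<inter> Bset y g"
    by (rule seg_open[OF g]) (use p in auto)
  have "open (bt g ` {p1<..<p2})"
    unfolding eqs by (intro open_Int open_ball Bset_open[OF g]) (auto simp: open_Compl)
  then have oA: "openin (top_of_set U) A" unfolding A_def by (intro openin_open_Int)
  have "A = U \<inter> bt g ` {p1..p2}"
  proof
    show "A \<subseteq> U \<inter> bt g ` {p1..p2}" unfolding A_def by auto
    show "U \<inter> bt g ` {p1..p2} \<subseteq> A"
    proof
      fix w assume w: "w \<in> U \<inter> bt g ` {p1..p2}"
      then obtain u where u: "p1 \<le> u" "u \<le> p2" "w = bt g u" by (auto simp: image_iff)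
      have "u \<noteq> p1" "u \<noteq> p2" using w u n1 n2 by auto
      then show "w \<in> A" unfolding A_def using u w by auto
    qed
  qed
  moreover have "closed (bt g ` {p1..p2})"
    using p eta(2)[of y] by (intro compact_imp_closed bt_compact[OF g]) auto
  ultimately have cA: "closedin (top_of_set U) A" by (simp add: closedin_closed_Int)
  have "A = {} \<or> A = U" using U(1) oA cA unfolding connected_clopen by blast
  moreover have "A \<noteq> {}" unfolding A_def using qU p by auto
  moreover have "y \<notin> A"
  proof
    assume "y \<in> A"
    then obtain u where u: "p1 < u" "u < p2" "y = bt g u" unfolding A_def by (auto simp: image_iff)
    have "u \<le> LL y" using u p eta(2)[of y] by simp
    then have "bt g u \<noteq> y" using u p by (intro bt_ne_y[OF g]) auto
    then show False using u(3) by simp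
  qed
  ultimately show False using U(2) by blast
qed

lemma gap:
  assumes U: "connected U" "y \<in> U" and g: "g \<in> germs y"
  shows "\<exists>\<delta>>0. \<delta> \<le> eta y / 2 \<and> ((\<forall>u\<in>{0<..<\<delta>}. bt g u \<in> U) \<or> (\<forall>u\<in>{0<..<\<delta>}. bt g u \<notin> U))"
proof -
  define H where "H = eta y / 2"
  have H: "0 < H" "H < eta y" unfolding H_def using eta(1)[of y] by auto
  show ?thesis
  proof (cases "\<forall>u\<in>{0<..<H}. bt g u \<in> U")
    case True then show ?thesis using H unfolding H_def by blast
  next
    case False
    then obtain p1 where p1: "0 < p1" "p1 < H" "bt g p1 \<notin> U" by auto
    show ?thesis
    proof (cases "\<exists>q\<in>{0<..<p1}. bt g q \<in> U")
      case True
      then obtain q where q: "0 < q" "q < p1" "bt g q \<in> U" by auto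
      have "\<forall>u\<in>{0<..<q}. bt g u \<in> U"
      proof
        fix u assume u: "u \<in> {0<..<q}"
        show "bt g u \<in> U"
        proof (rule ccontr)
          assume "bt g u \<notin> U"
          then show False using no_sandwich[OF U g, of u q p1] u q p1 H by auto
        qed
      qed
      then show ?thesis using q p1 H unfolding H_def by (intro exI[of _ q]) auto
    next
      case False
      then have "\<forall>u\<in>{0<..<p1}. bt g u \<notin> U" by auto
      then show ?thesis using p1 H unfolding H_def by (intro exI[of _ p1]) auto
    qed
  qed
qed

lemma loc_conn:
  fixes U :: "'a set"
  assumes U: "connected U" "z \<in> U" and r: "0 < r"
  shows "\<exists>\<delta>>0. \<delta> \<le> r \<and> connected (U \<inter> ball z \<delta>)"
proof -
  define dg where "dg g = (SOME \<delta>. \<delta> > 0 \<and> \<delta> \<le> eta z / 2 \<and>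
      ((\<forall>u\<in>{0<..<\<delta>}. bt g u \<in> U) \<or> (\<forall>u\<in>{0<..<\<delta>}. bt g u \<notin> U)))" for g
  have dg: "dg g > 0 \<and> dg g \<le> eta z / 2 \<and> ((\<forall>u\<in>{0<..<dg g}. bt g u \<in> U) \<or> (\<forall>u\<in>{0<..<dg g}. bt g u \<notin> U))"
    if "g \<in> germs z" for g
    unfolding dg_def by (rule someI_ex) (rule gap[OF U that])
  define G1 where "G1 = {g \<in> germs z. \<forall>u\<in>{0<..<dg g}. bt g u \<in> U}"
  define \<delta> where "\<delta> = Min (insert (min r (eta z / 2)) (dg ` germs z))"
  have fin: "finite (insert (min r (eta z / 2)) (dg ` germs z))" using germs_finite by simp
  have d0: "0 < \<delta>" unfolding \<delta>_def using fin dg r eta(1)[of z] by (subst Min_gr_iff) auto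
  have "\<delta> \<le> min r (eta z / 2)" unfolding \<delta>_def using fin by (intro Min_le) auto
  then have dr: "\<delta> \<le> r" "\<delta> \<le> eta z / 2" by auto
  have dg_le: "\<delta> \<le> dg g" if "g \<in> germs z" for g unfolding \<delta>_def using fin that by (auto intro: Min.coboundedI)
  have de: "\<delta> \<le> eta z" using dr eta(1)[of z] by simp
  have dL: "\<delta> \<le> LL z" using de eta(2)[of z] by simp
  define S where "S = insert {z} ((\<lambda>g. bt g ` {0..<\<delta>}) ` G1)"
  have eq: "U \<inter> ball z \<delta> = \<Union>S"
  proof
    show "U \<inter> ball z \<delta> \<subseteq> \<Union>S"
    proof
      fix w assume w: "w \<in> U \<inter> ball z \<delta>"
      then have "w \<in> insert z (\<Union>g\<in>germs z. bt g ` {0<..<\<delta>})" using ball_star[OF d0 de] by blast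
      then consider "w = z" | g u where "g \<in> germs z" "0 < u" "u < \<delta>" "w = bt g u" by auto
      then show "w \<in> \<Union>S"
      proof cases
        case 1 then show ?thesis unfolding S_def by auto
      next
        case 2
        have "g \<in> G1"
        proof (rule ccontr)
          assume "g \<notin> G1"
          then have "\<forall>u\<in>{0<..<dg g}. bt g u \<notin> U" using dg[OF 2(1)] 2(1) unfolding G1_def by blast
          then show False using 2 w dg_le[OF 2(1)] by auto
        qed
        moreover have "w \<in> bt g ` {0..<\<delta>}" using 2 by auto
        ultimately show ?thesis unfolding S_def by blast
      qed
    qed
  next
    show "\<Union>S \<subseteq> U \<inter> ball z \<delta>"
    proof
      fix w assume "w \<in> \<Union>S"
      then consider "w = z" | g u where "g \<in> G1" "0 \<le> u" "u < \<delta>" "w = bt g u"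
        unfolding S_def by auto
      then show "w \<in> U \<inter> ball z \<delta>"
      proof cases
        case 1 then show ?thesis using U d0 by simp
      next
        case 2
        have gz: "g \<in> germs z" using 2 unfolding G1_def by blast
        show ?thesis
        proof (cases "u = 0")
          case True then show ?thesis using 2 bt0[OF gz] U d0 by simp
        next
          case False
          then have "w \<in> U" using 2 dg_le[OF gz] unfolding G1_def by auto
          moreover have "w \<in> ball z \<delta>"
          proof -
            have "w \<in> bt g ` {0<..<\<delta>}" using 2 False by auto
            then have "w \<in> insert z (\<Union>g\<in>germs z. bt g ` {0<..<\<delta>})" using gz by blast
            then show ?thesis using ball_star[OF d0 de] by simp
          qed
          ultimately show ?thesis by simp
        qed
      qed
    qed
  qed
  have "connected (\<Union>S)"
  proof (rule connected_Union)
    fix s assume "s \<in> S"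
    then consider "s = {z}" | g where "g \<in> G1" "s = bt g ` {0..<\<delta>}" unfolding S_def by auto
    then show "connected s"
    proof cases
      case 2
      have gz: "g \<in> germs z" using 2 unfolding G1_def by blast
      show ?thesis unfolding 2(2)
        by (rule connected_continuous_image[OF continuous_on_subset[OF bt_cont[OF gz]] connected_Ico])
           (use dL in auto)
    qed simp
  next
    have "z \<in> \<Inter>S"
    proof
      fix s assume "s \<in> S"
      then consider "s = {z}" | g where "g \<in> G1" "s = bt g ` {0..<\<delta>}" unfolding S_def by auto
      then show "z \<in> s"
      proof cases
        case 2
        have gz: "g \<in> germs z" using 2 unfolding G1_def by blast
        have "bt g 0 \<in> bt g ` {0..<\<delta>}" using d0 by auto
        then show ?thesis using 2 bt0[OF gz] by simp
      qed simp
    qed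
    then show "\<Inter>S \<noteq> {}" by blast
  qed
  then show ?thesis using eq d0 dr by auto
qed

lemma comp_open:
  fixes U :: "'a set"
  assumes U: "connected U" and K: "K \<in> components (U - {x})"
  shows "openin (top_of_set U) K"
proof -
  have "\<exists>T. openin (top_of_set U) T \<and> z \<in> T \<and> T \<subseteq> K" if z: "z \<in> K" for z
  proof -
    have zU: "z \<in> U - {x}" using z K in_components_subset by blast
    define r where "r = dist z x"
    have r: "0 < r" using zU unfolding r_def by simp
    obtain \<delta> where d: "0 < \<delta>" "\<delta> \<le> r" "connected (U \<inter> ball z \<delta>)"
      using loc_conn[OF U _ r] zU by blast
    have sub: "U \<inter> ball z \<delta> \<subseteq> U - {x}" using d unfolding r_def by auto
    have "U \<inter> ball z \<delta> \<subseteq> K"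
      by (rule components_maximal[OF K d(3) sub]) (use z zU d in auto)
    moreover have "openin (top_of_set U) (U \<inter> ball z \<delta>)" by (intro openin_open_Int open_ball)
    moreover have "z \<in> U \<inter> ball z \<delta>" using zU d by simp
    ultimately show ?thesis by blast
  qed
  then show ?thesis by (subst openin_subopen) blast
qed

lemma deg_bound:
  fixes U :: "'a set"
  assumes U: "connected U" "x \<in> interior U"
  shows "finite (components (U - {x})) \<and> card (components (U - {x})) \<le> card (germs x)"
proof -
  obtain r where r: "0 < r" "ball x r \<subseteq> U" using U(2) mem_interior by blast
  define r' where "r' = min r (eta x)"
  have r': "0 < r'" "r' \<le> eta x" "r' \<le> r" unfolding r'_def using r eta(1)[of x] by auto
  have r'L: "r' \<le> LL x" using r' eta(2)[of x] by simp
  define P where "P g = bt g ` {0<..<r'}" for g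
  have bs: "ball x r' = insert x (\<Union>g\<in>germs x. P g)" unfolding P_def by (rule ball_star[OF r'(1,2)])
  have Psub: "P g \<subseteq> U - {x}" if "g \<in> germs x" for g
  proof
    fix w assume w: "w \<in> P g"
    then have "w \<in> ball x r'" using bs that by blast
    then have "w \<in> U" using r r' by auto
    moreover have "w \<noteq> x"
    proof -
      obtain u where u: "0 < u" "u < r'" "w = bt g u" using w unfolding P_def by (auto simp: image_iff)
      have "bt g u \<noteq> x" using u r'L by (intro bt_ne_y[OF that]) auto
      then show ?thesis using u by simp
    qed
    ultimately show "w \<in> U - {x}" by simp
  qed
  have Pconn: "connected (P g)" if "g \<in> germs x" for g
    unfolding P_def
    by (rule connected_continuous_image[OF continuous_on_subset[OF bt_cont[OF that]] connected_Ioo])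
       (use r'L in auto)
  have Pne: "P g \<noteq> {}" for g unfolding P_def using r' by auto
  have xU: "x \<in> U" using U(2) interior_subset by blast
  have meets: "\<exists>g\<in>germs x. K \<inter> P g \<noteq> {}" if K: "K \<in> components (U - {x})" for K
  proof (rule ccontr)
    assume "\<not> (\<exists>g\<in>germs x. K \<inter> P g \<noteq> {})"
    then have n: "\<forall>g\<in>germs x. K \<inter> P g = {}" by blast
    have KU: "K \<subseteq> U - {x}" using K in_components_subset by blast
    have Kb: "K \<inter> ball x r' = {}" using n KU unfolding bs by blast
    obtain C where C: "closed C" "K = (U - {x}) \<inter> C"
      using closedin_component[OF K] unfolding closedin_closed by blast
    have "K = U \<inter> (C \<inter> - ball x r')"
    proof
      show "K \<subseteq> U \<inter> (C \<inter> - ball x r')" using C Kb by auto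
      show "U \<inter> (C \<inter> - ball x r') \<subseteq> K" using C r' by auto
    qed
    then have cK: "closedin (top_of_set U) K"
      by (simp add: closedin_closed_Int closed_Int C(1) open_ball closed_Compl)
    have oK: "openin (top_of_set U) K" by (rule comp_open[OF U(1) K])
    have "K = {} \<or> K = U" using U(1) oK cK unfolding connected_clopen by blast
    moreover have "K \<noteq> {}" using in_components_nonempty[OF K] .
    moreover have "K \<noteq> U" using KU xU by blast
    ultimately show False by blast
  qed
  define f where "f K = (SOME g. g \<in> germs x \<and> K \<inter> P g \<noteq> {})" for K
  have f: "f K \<in> germs x \<and> K \<inter> P (f K) \<noteq> {}" if "K \<in> components (U - {x})" for K
    unfolding f_def by (rule someI_ex) (use meets[OF that] in blast)
  have inj: "inj_on f (components (U - {x}))"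
  proof (rule inj_onI)
    fix K1 K2 assume K1: "K1 \<in> components (U - {x})" and K2: "K2 \<in> components (U - {x})" and eq: "f K1 = f K2"
    define g where "g = f K1"
    have g: "g \<in> germs x" using f[OF K1] unfolding g_def by blast
    have "P g \<subseteq> K1" using components_maximal[OF K1 Pconn[OF g] Psub[OF g]] f[OF K1] unfolding g_def by blast
    moreover have "P g \<subseteq> K2" using components_maximal[OF K2 Pconn[OF g] Psub[OF g]] f[OF K2] eq unfolding g_def by simp
    ultimately have "K1 \<inter> K2 \<noteq> {}" using Pne[of g] by blast
    then show "K1 = K2" using components_nonoverlap[OF K1 K2] by blast
  qed
  have img: "f ` components (U - {x}) \<subseteq> germs x" using f by blast
  show ?thesis using inj_on_finite[OF inj img germs_finite] card_inj_on_le[OF inj img germs_finite] by blast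
qed

lemma deg_le: "deg (x::'a) \<le> ereal (real (card (germs x)))"
  unfolding deg_def
proof (rule SUP_least)
  fix U assume "U \<in> {U. connected U \<and> x \<in> interior U}"
  then have U: "connected U" "x \<in> interior U" by auto
  note db = deg_bound[OF U]
  then show "num_components (U - {x}) \<le> ereal (real (card (germs x)))"
    unfolding num_components_def by simp
qed

end


lemma diam_le:
  fixes S :: "'a::metric_space set"
  assumes "\<And>x y. x \<in> S \<Longrightarrow> y \<in> S \<Longrightarrow> dist x y \<le> d" "0 \<le> d"
  shows "diameter S \<le> d"
proof (cases "S = {}")
  case False
  then have "S \<times> S \<noteq> {}" by simp
  then have "(SUP (x, y)\<in>S \<times> S. dist x y) \<le> d"
    by (rule cSUP_least) (use assms in auto)
  then show ?thesis unfolding diameter_def using False by simp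
qed (use assms in simp)

lemma h1_mono:
  assumes "A \<subseteq> B"
  shows "hausdorff1 A \<le> hausdorff1 B"
  unfolding hausdorff1_def
proof (rule SUP_mono)
  fix \<delta> :: real assume d: "\<delta> \<in> {0<..}"
  have "hausdorff1_pre \<delta> A \<le> hausdorff1_pre \<delta> B"
    unfolding hausdorff1_pre_def
    by (rule INF_superset_mono) (use assms in auto)
  then show "\<exists>m\<in>{0<..}. hausdorff1_pre \<delta> A \<le> hausdorff1_pre m B" using d by blast
qed

lemma h1_ge_pre: "0 < \<delta> \<Longrightarrow> hausdorff1_pre \<delta> A \<le> hausdorff1 A"
  unfolding hausdorff1_def by (rule SUP_upper) simp

lemma h1_pre_le:
  assumes "A \<subseteq> (\<Union>i. D i)" "\<And>i. bounded (D i)" "\<And>i. diameter (D i) \<le> \<delta>"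
  shows "hausdorff1_pre \<delta> A \<le> (\<Sum>i. ennreal (diameter (D i)))"
  unfolding hausdorff1_pre_def by (rule INF_lower) (use assms in blast)

lemma ennreal_div_ge:
  fixes a b :: ennreal
  assumes a: "ennreal A \<le> a" and b: "b \<le> ennreal B" and B: "0 < B" and A: "0 \<le> A"
  shows "ennreal (A / B) \<le> a / b"
proof (cases "b = 0")
  case True
  show ?thesis
  proof (cases "A = 0")
    case False
    then have "0 < ennreal A" using A by simp
    then have "0 < a" using a by (rule less_le_trans)
    then have "a \<noteq> 0" by simp
    then show ?thesis using True by simp
  qed simp
next
  case False
  obtain \<beta> where \<beta>: "0 \<le> \<beta>" "b = ennreal \<beta>"
  proof (cases b rule: ennreal_cases)
    case top
    then show ?thesis using b by (auto simp: top_unique)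
  qed
  have \<beta>0: "0 < \<beta>" using \<beta> False by (cases "\<beta> = 0") auto
  have \<beta>B: "\<beta> \<le> B" using b \<beta> B by (simp add: ennreal_le_iff)
  have "ennreal (A / B) \<le> ennreal (A / \<beta>)"
    by (rule ennreal_leI) (use A \<beta>0 \<beta>B in \<open>simp add: divide_left_mono\<close>)
  also have "\<dots> = ennreal A / ennreal \<beta>" using divide_ennreal[OF A \<beta>0] by simp
  also have "\<dots> \<le> a / b" unfolding \<beta>(2) by (rule divide_right_mono_ennreal[OF a])
  finally show ?thesis .
qed

context mg
begin

lemma haus_seg_le:
  assumes g: "g \<in> germs y" and \<rho>: "0 < \<rho>" "\<rho> \<le> LL y"
  shows "hausdorff1 (bt g ` {0<..<\<rho>}) \<le> ennreal \<rho>"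
  unfolding hausdorff1_def
proof (rule SUP_least)
  fix \<delta> :: real assume "\<delta> \<in> {0<..}"
  then have d: "0 < \<delta>" by simp
  define N :: nat where "N = nat \<lceil>\<rho> / \<delta>\<rceil> + 1"
  have N0: "0 < N" unfolding N_def by simp
  have "\<rho> / \<delta> \<le> real N" unfolding N_def by linarith
  then have Nd: "\<rho> / N \<le> \<delta>" using d N0 by (simp add: field_simps)
  define D where "D i = (if i < N then bt g ` {real i * \<rho> / N .. real (Suc i) * \<rho> / N} else {})" for i
  have iv: "0 \<le> real i * \<rho> / N" "real (Suc i) * \<rho> / N \<le> LL y" if "i < N" for i
  proof -
    show "0 \<le> real i * \<rho> / N" using \<rho> by simp
    have "real (Suc i) \<le> real N" using that by simp
    then have "real (Suc i) * \<rho> / N \<le> real N * \<rho> / N" using \<rho> N0 by (intro divide_right_mono mult_right_mono) auto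
    then show "real (Suc i) * \<rho> / N \<le> LL y" using \<rho> N0 by simp
  qed
  have cov: "bt g ` {0<..<\<rho>} \<subseteq> (\<Union>i. D i)"
  proof
    fix w assume "w \<in> bt g ` {0<..<\<rho>}"
    then obtain u where u: "0 < u" "u < \<rho>" "w = bt g u" by (auto simp: image_iff)
    define i where "i = nat \<lfloor>u * N / \<rho>\<rfloor>"
    have q0: "0 \<le> u * N / \<rho>" using u \<rho> by simp
    have qN: "u * N / \<rho> < N" using u \<rho> N0 by (simp add: field_simps)
    have i1: "real i \<le> u * N / \<rho>" unfolding i_def using q0 by linarith
    have i2: "u * N / \<rho> < real i + 1" unfolding i_def using q0 by linarith
    have iN: "i < N" using i1 qN unfolding i_def using q0 by linarith
    have "real i * \<rho> / N \<le> u" using i1 \<rho> N0 by (simp add: field_simps)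
    moreover have "u \<le> real (Suc i) * \<rho> / N" using i2 \<rho> N0 by (simp add: field_simps)
    ultimately have "w \<in> D i" unfolding D_def using iN u by auto
    then show "w \<in> (\<Union>i. D i)" by blast
  qed
  have bdd: "bounded (D i)" for i
    unfolding D_def using iv by (auto intro: compact_imp_bounded bt_compact[OF g])
  have dm: "diameter (D i) \<le> \<rho> / N" for i
  proof (cases "i < N")
    case True
    have "diameter (bt g ` {real i * \<rho> / N .. real (Suc i) * \<rho> / N}) \<le> \<rho> / N"
    proof (rule diam_le)
      fix a b assume "a \<in> bt g ` {real i * \<rho> / N .. real (Suc i) * \<rho> / N}"
        "b \<in> bt g ` {real i * \<rho> / N .. real (Suc i) * \<rho> / N}"
      then obtain u v where uv: "real i * \<rho> / N \<le> u" "u \<le> real (Suc i) * \<rho> / N" "a = bt g u"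
        "real i * \<rho> / N \<le> v" "v \<le> real (Suc i) * \<rho> / N" "b = bt g v" by (auto simp: image_iff)
      have "dist a b \<le> \<bar>u - v\<bar>" unfolding uv using bt_dist[OF g] uv iv[OF True] by auto
      also have "\<dots> \<le> \<rho> / N"
      proof -
        have e1: "real i * \<rho> / N = real i * (\<rho> / N)" by simp
        have e2: "real (Suc i) * \<rho> / N = real i * (\<rho> / N) + \<rho> / N" by (simp add: add_divide_distrib distrib_right)
        show ?thesis using uv(1,2,4,5) unfolding e1 e2 abs_le_iff by linarith
      qed
      finally show "dist a b \<le> \<rho> / N" .
    next
      show "0 \<le> \<rho> / N" using \<rho> by simp
    qed
    then show ?thesis unfolding D_def using True by simp
  next
    case False then show ?thesis unfolding D_def using \<rho> by simp
  qed
  have "hausdorff1_pre \<delta> (bt g ` {0<..<\<rho>}) \<le> (\<Sum>i. ennreal (diameter (D i)))"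
    by (rule h1_pre_le[OF cov bdd]) (use dm Nd in \<open>meson order_trans\<close>)
  also have "\<dots> = (\<Sum>i<N. ennreal (diameter (D i)))"
    by (rule suminf_finite) (auto simp: D_def)
  also have "\<dots> \<le> (\<Sum>i<N. ennreal (\<rho> / N))" by (intro sum_mono ennreal_leI dm)
  also have "\<dots> = ennreal (\<Sum>i<N. \<rho> / N)" by (rule sum_ennreal) (use \<rho> in simp)
  also have "\<dots> = ennreal \<rho>" using N0 by simp
  finally show "hausdorff1_pre \<delta> (bt g ` {0<..<\<rho>}) \<le> ennreal \<rho>" .
qed

end


context mg
begin

lemma haus_lower:
  fixes A :: "'a set"
  assumes J: "J \<subseteq> germs y" and d: "0 < \<delta>" "\<delta> < \<rho>" "2 * \<rho> < eta y"
    and A: "(\<Union>j\<in>J. bt j ` {0<..<\<rho>}) \<subseteq> A"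
  shows "ennreal (real (card J) * (\<rho> - \<delta>)) \<le> hausdorff1_pre \<delta> A"
  unfolding hausdorff1_pre_def
proof (rule INF_greatest)
  fix D :: "nat \<Rightarrow> 'a set" assume "D \<in> {D. A \<subseteq> (\<Union>i. D i) \<and> (\<forall>i. bounded (D i) \<and> diameter (D i) \<le> \<delta>)}"
  then have cov: "A \<subseteq> (\<Union>i. D i)" and bd: "\<And>i. bounded (D i)" and dm: "\<And>i. diameter (D i) \<le> \<delta>" by auto
  define P where "P j = bt j ` {\<delta><..<\<rho>}" for j
  define e where "e j (i::nat) = (if D i \<inter> P j \<noteq> {} then ennreal (diameter (D i)) else 0)" for j i
  have etaL: "eta y \<le> LL y" by (rule eta(2))
  have step1: "ennreal (\<rho> - \<delta>) \<le> (\<Sum>i. e j i)" if j: "j \<in> J" for j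
  proof -
    have jg: "j \<in> germs y" using j J by blast
    define a where "a (i::nat) = Inf (dist y ` (D i \<inter> P j))" for i
    define I where "I (i::nat) = (if D i \<inter> P j \<noteq> {} then {a i .. a i + diameter (D i)} else {})" for i
    have covI: "{\<delta><..<\<rho>} \<subseteq> (\<Union>i. I i)"
    proof
      fix u assume u: "u \<in> {\<delta><..<\<rho>}"
      have "bt j u \<in> bt j ` {0<..<\<rho>}" using u d by auto
      then have "bt j u \<in> (\<Union>j\<in>J. bt j ` {0<..<\<rho>})" using j by blast
      then have "bt j u \<in> A" using A by (rule subsetD[rotated])
      then obtain i where i: "bt j u \<in> D i" using cov by blast
      have uP: "bt j u \<in> D i \<inter> P j" using i u unfolding P_def by auto
      have du: "dist y (bt j u) = u" by (rule dist_bt_eq[OF jg]) (use u d in auto)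
      have bb: "bdd_below (dist y ` (D i \<inter> P j))" by (rule bdd_belowI[of _ 0]) auto
      have "a i \<le> u" unfolding a_def using du uP by (metis cInf_lower bb imageI)
      moreover have "u - diameter (D i) \<le> a i"
        unfolding a_def
      proof (rule cInf_greatest)
        show "dist y ` (D i \<inter> P j) \<noteq> {}" using uP by blast
        fix r assume "r \<in> dist y ` (D i \<inter> P j)"
        then obtain w where w: "w \<in> D i \<inter> P j" "r = dist y w" by blast
        have "u = dist y (bt j u)" using du by simp
        also have "\<dots> \<le> dist y w + dist w (bt j u)" by (rule dist_triangle)
        also have "dist w (bt j u) \<le> diameter (D i)"
          using diameter_bounded_bound[OF bd] w uP by blast
        finally show "u - diameter (D i) \<le> r" using w by simp
      qed
      ultimately have "u \<in> I i" unfolding I_def using uP by auto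
      then show "u \<in> (\<Union>i. I i)" by blast
    qed
    have Isets: "range I \<subseteq> sets lborel" unfolding I_def by auto
    have "ennreal (\<rho> - \<delta>) = emeasure lborel {\<delta><..<\<rho>}" using d by simp
    also have "\<dots> \<le> emeasure lborel (\<Union>i. I i)"
      by (rule emeasure_mono[OF covI]) (rule sets.countable_UN[OF Isets])
    also have "\<dots> \<le> (\<Sum>i. emeasure lborel (I i))" by (rule emeasure_subadditive_countably[OF Isets])
    also have "(\<Sum>i. emeasure lborel (I i)) = (\<Sum>i. e j i)"
    proof (rule suminf_cong)
      fix i
      show "emeasure lborel (I i) = e j i"
        unfolding I_def e_def using diameter_ge_0[OF bd] by simp
    qed
    finally show ?thesis .
  qed
  have step3: "(\<Sum>j\<in>J. e j i) \<le> ennreal (diameter (D i))" for i :: nat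
  proof -
    define Ji where "Ji = {j \<in> J. D i \<inter> P j \<noteq> {}}"
    have fJ: "finite J" using J germs_finite finite_subset by blast
    have sub1: "(\<Sum>j\<in>J. e j i) = (\<Sum>j\<in>Ji. e j i)"
      by (rule sum.mono_neutral_right[OF fJ]) (auto simp: Ji_def e_def)
    have sing: "j = k" if jk: "j \<in> Ji" "k \<in> Ji" for j k
    proof (rule ccontr)
      assume ne: "j \<noteq> k"
      have jg: "j \<in> germs y" "k \<in> germs y" using jk J unfolding Ji_def by auto
      obtain u where u: "\<delta> < u" "u < \<rho>" "bt j u \<in> D i" using jk(1) unfolding Ji_def P_def by auto
      obtain v where v: "\<delta> < v" "v < \<rho>" "bt k v \<in> D i" using jk(2) unfolding Ji_def P_def by auto
      have "dist (bt j u) (bt k v) \<le> diameter (D i)" using diameter_bounded_bound[OF bd u(3) v(3)] .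
      also have "\<dots> \<le> \<delta>" by (rule dm)
      finally have le: "dist (bt j u) (bt k v) \<le> \<delta>" .
      have "min (u + v) (eta y - u) \<le> dist (bt j u) (bt k v)"
        by (rule D2[OF jg(1) jg(2) ne]) (use u v d etaL in auto)
      then show False using le u v d by (auto simp: min_def split: if_splits)
    qed
    show ?thesis
    proof (cases "Ji = {}")
      case True then show ?thesis using sub1 by simp
    next
      case False
      then obtain j0 where j0: "j0 \<in> Ji" by blast
      then have "Ji = {j0}" using sing by blast
      then show ?thesis using sub1 j0 unfolding e_def Ji_def by auto
    qed
  qed
  have fJ: "finite J" using J germs_finite finite_subset by blast
  have "ennreal (real (card J) * (\<rho> - \<delta>)) = (\<Sum>j\<in>J. ennreal (\<rho> - \<delta>))"
    by (subst sum_ennreal) (use d in auto)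
  also have "\<dots> \<le> (\<Sum>j\<in>J. \<Sum>i. e j i)" by (rule sum_mono) (rule step1)
  also have "\<dots> = (\<Sum>i. \<Sum>j\<in>J. e j i)" by (rule suminf_sum[symmetric]) (rule summableI)
  also have "\<dots> \<le> (\<Sum>i. ennreal (diameter (D i)))"
    by (rule suminf_le) (auto intro: step3 summableI)
  finally show "ennreal (real (card J) * (\<rho> - \<delta>)) \<le> (\<Sum>i. ennreal (diameter (D i)))" .
qed

end


lemma sk_pos:
  assumes t: "0 < t" and kt: "0 < k \<Longrightarrow> sqrt k * t < pi"
  shows "0 < sk k t"
proof (cases "0 < k")
  case True
  have "0 < sin (sqrt k * t)" using True t kt by (intro sin_gt_zero) auto
  then show ?thesis using True unfolding sk_def by simp
next
  case False
  show ?thesis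
  proof (cases "k = 0")
    case True then show ?thesis using t unfolding sk_def by simp
  next
    case False
    then have k: "k < 0" using \<open>\<not> 0 < k\<close> by simp
    have "0 < sinh (sqrt (- k) * t)" using k t by (simp add: sinh_real_pos_iff)
    then show ?thesis using k unfolding sk_def by simp
  qed
qed

lemma sk_cont: "isCont (sk k) t"
proof (cases "0 < k")
  case True
  have "sk k = (\<lambda>t. sin (sqrt k * t) / sqrt k)" using True by (intro ext) (simp add: sk_def)
  then show ?thesis using True by (auto intro!: continuous_intros)
next
  case False
  show ?thesis
  proof (cases "k = 0")
    case True
    have "sk k = (\<lambda>t. t)" using True by (intro ext) (simp add: sk_def)
    then show ?thesis by simp
  next
    case False
    have "sk k = (\<lambda>t. sinh (sqrt (- k) * t) / sqrt (- k))" using False \<open>\<not> 0 < k\<close> by (intro ext) (simp add: sk_def)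
    then show ?thesis using False \<open>\<not> 0 < k\<close> by (auto intro!: continuous_intros isCont_sinh)
  qed
qed

lemma F_cont:
  assumes "0 < sk k t"
  shows "isCont (\<lambda>t. sk k t powr (n - 1)) t"
  unfolding isCont_def
  by (rule tendsto_powr[OF sk_cont[unfolded isCont_def] tendsto_const]) (use assms in simp)

lemma alpha_pos: "1 \<le> n \<Longrightarrow> 0 < alpha_const (n - 1)"
  unfolding alpha_const_def by (auto intro!: divide_pos_pos Gamma_real_pos)

lemma Vratio:
  assumes n: "1 \<le> n" and th: "0 < \<theta>" and R: "0 < R"
  shows "\<exists>\<epsilon> \<rho>. 0 < \<rho> \<and> \<rho> < \<epsilon> \<and> \<epsilon> \<le> R \<and> 0 < Vkn k n (\<epsilon> - \<rho>) \<epsilon> \<and>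
     Vkn k n \<epsilon> (\<epsilon> + \<rho>) \<le> (1 + \<theta>) * Vkn k n (\<epsilon> - \<rho>) \<epsilon>"
proof -
  define F where "F t = sk k t powr (n - 1)" for t
  define b where "b = (if 0 < k then 1 / sqrt k else 1)"
  have b0: "0 < b" unfolding b_def by simp
  define \<epsilon> where "\<epsilon> = min R b / 2"
  have e0: "0 < \<epsilon>" "\<epsilon> \<le> R" unfolding \<epsilon>_def using R b0 by auto
  have skp: "0 < sk k t" if "0 < t" "t \<le> 2 * \<epsilon>" for t
  proof (rule sk_pos[OF that(1)])
    assume k: "0 < k"
    have "t \<le> 1 / sqrt k" using that unfolding \<epsilon>_def b_def using k by simp
    then have "sqrt k * t \<le> 1" using k by (simp add: field_simps)
    then show "sqrt k * t < pi" using pi_gt3 by simp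
  qed
  have Fc: "isCont F t" if "0 < t" "t \<le> 2 * \<epsilon>" for t
    unfolding F_def by (rule F_cont[OF skp[OF that]])
  have Fnn: "0 \<le> F t" for t unfolding F_def by simp
  have Fe: "0 < F \<epsilon>" unfolding F_def using skp[of \<epsilon>] e0 by simp
  define \<theta>' where "\<theta>' = \<theta> / (2 + \<theta>)"
  have th': "0 < \<theta>'" "\<theta>' < 1" "1 + \<theta>' = (1 + \<theta>) * (1 - \<theta>')" unfolding \<theta>'_def using th
    by (auto simp: field_simps)
  obtain r0 where r0: "0 < r0" "\<And>x. x \<noteq> \<epsilon> \<and> norm (x - \<epsilon>) < r0 \<Longrightarrow> norm (F x - F \<epsilon>) < \<theta>' * F \<epsilon>"
    using LIM_D[OF Fc[unfolded isCont_def, of \<epsilon>], of "\<theta>' * F \<epsilon>"] e0 Fe th' by auto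
  define \<rho> where "\<rho> = min (r0 / 2) (\<epsilon> / 2)"
  have r: "0 < \<rho>" "\<rho> < \<epsilon>" "\<rho> < r0" unfolding \<rho>_def using r0 e0 by auto
  have Fb: "\<bar>F t - F \<epsilon>\<bar> \<le> \<theta>' * F \<epsilon>" if "\<epsilon> - \<rho> \<le> t" "t \<le> \<epsilon> + \<rho>" for t
  proof (cases "t = \<epsilon>")
    case False
    have "\<bar>t - \<epsilon>\<bar> < r0" using that r by auto
    then show ?thesis using r0(2)[of t] False by auto
  qed (use th' Fe in simp)
  have Fcon: "continuous_on {a..b'} F" if "\<epsilon> - \<rho> \<le> a" "b' \<le> \<epsilon> + \<rho>" for a b'
    by (rule continuous_at_imp_continuous_on) (use that r Fc in auto)
  have int1: "F integrable_on {\<epsilon>..\<epsilon> + \<rho>}" by (rule integrable_continuous_interval[OF Fcon]) (use r in auto)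
  have int2: "F integrable_on {\<epsilon> - \<rho>..\<epsilon>}" by (rule integrable_continuous_interval[OF Fcon]) (use r in auto)
  have I1: "integral {\<epsilon>..\<epsilon> + \<rho>} F \<le> \<rho> * ((1 + \<theta>') * F \<epsilon>)"
  proof -
    have "integral {\<epsilon>..\<epsilon> + \<rho>} F \<le> integral {\<epsilon>..\<epsilon> + \<rho>} (\<lambda>_. (1 + \<theta>') * F \<epsilon>)"
      by (rule integral_le[OF int1 integrable_const_ivl]) (use Fb r in \<open>force simp: algebra_simps abs_le_iff\<close>)
    also have "\<dots> = \<rho> * ((1 + \<theta>') * F \<epsilon>)" using r by simp
    finally show ?thesis .
  qed
  have I2: "\<rho> * ((1 - \<theta>') * F \<epsilon>) \<le> integral {\<epsilon> - \<rho>..\<epsilon>} F"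
  proof -
    have "integral {\<epsilon> - \<rho>..\<epsilon>} (\<lambda>_. (1 - \<theta>') * F \<epsilon>) \<le> integral {\<epsilon> - \<rho>..\<epsilon>} F"
      by (rule integral_le[OF integrable_const_ivl int2]) (use Fb r in \<open>force simp: algebra_simps abs_le_iff\<close>)
    moreover have "integral {\<epsilon> - \<rho>..\<epsilon>} (\<lambda>_. (1 - \<theta>') * F \<epsilon>) = \<rho> * ((1 - \<theta>') * F \<epsilon>)" using r by simp
    ultimately show ?thesis by linarith
  qed
  define \<alpha> where "\<alpha> = alpha_const (n - 1)"
  have a0: "0 < \<alpha>" unfolding \<alpha>_def by (rule alpha_pos[OF n])
  have V1: "Vkn k n \<epsilon> (\<epsilon> + \<rho>) = \<alpha> * integral {\<epsilon>..\<epsilon> + \<rho>} F" unfolding Vkn_def \<alpha>_def F_def by simp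
  have V2: "Vkn k n (\<epsilon> - \<rho>) \<epsilon> = \<alpha> * integral {\<epsilon> - \<rho>..\<epsilon>} F" unfolding Vkn_def \<alpha>_def F_def by simp
  have p2: "0 < \<rho> * ((1 - \<theta>') * F \<epsilon>)" using r th' Fe by simp
  have "0 < Vkn k n (\<epsilon> - \<rho>) \<epsilon>" unfolding V2 using a0 p2 I2 by simp
  moreover have "Vkn k n \<epsilon> (\<epsilon> + \<rho>) \<le> (1 + \<theta>) * Vkn k n (\<epsilon> - \<rho>) \<epsilon>"
  proof -
    have "Vkn k n \<epsilon> (\<epsilon> + \<rho>) \<le> \<alpha> * (\<rho> * ((1 + \<theta>') * F \<epsilon>))" unfolding V1 using I1 a0 by simp
    also have "\<dots> = (1 + \<theta>) * (\<alpha> * (\<rho> * ((1 - \<theta>') * F \<epsilon>)))" unfolding th'(3) by (simp only: mult_ac)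
    also have "\<dots> \<le> (1 + \<theta>) * (\<alpha> * integral {\<epsilon> - \<rho>..\<epsilon>} F)"
      using I2 a0 th by (intro mult_left_mono) auto
    finally show ?thesis unfolding V2 .
  qed
  ultimately show ?thesis using r e0 by blast
qed


context mg
begin

lemma measure_contra:
  fixes x :: 'a
  assumes BG: "BG TYPE('a) k n C" and n: "1 \<le> n" and C: "1 \<le> C"
    and m: "C + 1 < real (card (germs x))"
  shows False
proof -
  have fin: "finite (germs x)" by (rule germs_finite)
  have "germs x \<noteq> {}" using m C by auto
  then obtain g0 where g0: "g0 \<in> germs x" by blast
  define J where "J = germs x - {g0}"
  have JG: "J \<subseteq> germs x" unfolding J_def by blast
  have cJ: "real (card J) = real (card (germs x)) - 1"
  proof -
    have "0 < card (germs x)" using fin g0 card_gt_0_iff by blast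
    then show ?thesis unfolding J_def using fin g0 by (simp add: card_Diff_singleton of_nat_diff)
  qed
  define a where "a = real (card J)"
  have aC: "C < a" unfolding a_def using cJ m by simp
  define \<theta> where "\<theta> = (a - C) / (2 * (a + C))"
  have th0: "0 < \<theta>" unfolding \<theta>_def using aC C by simp
  have th1: "\<theta> < 1" unfolding \<theta>_def using aC C by (simp add: field_simps)
  have key: "C * (1 + \<theta>) < a * (1 - \<theta>)"
  proof -
    have "\<theta> * (a + C) = (a - C) / 2" unfolding \<theta>_def using aC C by (simp add: field_simps)
    then have "\<theta> * (a + C) < a - C" using aC by simp
    then show ?thesis by (simp add: algebra_simps)
  qed
  have eta0: "0 < eta x / 5" using eta(1)[of x] by simp
  obtain \<epsilon> \<rho> where er: "0 < \<rho>" "\<rho> < \<epsilon>" "\<epsilon> \<le> eta x / 5" "0 < Vkn k n (\<epsilon> - \<rho>) \<epsilon>"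
    "Vkn k n \<epsilon> (\<epsilon> + \<rho>) \<le> (1 + \<theta>) * Vkn k n (\<epsilon> - \<rho>) \<epsilon>"
    using Vratio[OF n th0 eta0, of k] by blast
  have etaL: "eta x \<le> LL x" by (rule eta(2))
  define \<delta> where "\<delta> = \<theta> * \<rho>"
  have d: "0 < \<delta>" "\<delta> < \<rho>" unfolding \<delta>_def using th0 th1 er by auto
  define c where "c = bt g0 \<epsilon>"
  define U where "U = ball x \<rho> \<inter> (\<Union>j\<in>J. Bset x j)"
  have Ueq: "U = (\<Union>j\<in>J. bt j ` {0<..<\<rho>})"
  proof
    show "U \<subseteq> (\<Union>j\<in>J. bt j ` {0<..<\<rho>})"
    proof
      fix w assume w: "w \<in> U"
      then obtain j where j: "j \<in> J" "w \<in> Bset x j" unfolding U_def by blast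
      then obtain u where u: "0 < u" "u < LL x" "w = bt j u" unfolding Bset_def by (auto simp: image_iff)
      have jg: "j \<in> germs x" using j JG by blast
      have "min u (eta x) \<le> dist x w" using D1[OF jg u(1,2)] u by simp
      moreover have "dist x w < \<rho>" using w unfolding U_def by simp
      ultimately have "u < \<rho>" using er eta(1)[of x] by (auto simp: min_def split: if_splits)
      then have "w \<in> bt j ` {0<..<\<rho>}" using u by auto
      then show "w \<in> (\<Union>j\<in>J. bt j ` {0<..<\<rho>})" using j by blast
    qed
  next
    show "(\<Union>j\<in>J. bt j ` {0<..<\<rho>}) \<subseteq> U"
    proof
      fix w assume "w \<in> (\<Union>j\<in>J. bt j ` {0<..<\<rho>})"
      then obtain j u where ju: "j \<in> J" "0 < u" "u < \<rho>" "w = bt j u" by auto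
      have jg: "j \<in> germs x" using ju JG by blast
      have du: "dist x w = u" using dist_bt_eq[OF jg] ju er by simp
      have "w \<in> Bset x j" unfolding ju(4)
        by (rule bt_in_Bset[OF jg ju(2)]) (use ju er etaL du in auto)
      then show "w \<in> U" unfolding U_def using du ju by auto
    qed
  qed
  have Uo: "open U" unfolding U_def
    by (intro open_Int open_ball open_UN ballI Bset_open) (use JG in blast)
  have Ub: "U \<in> sets borel" using Uo by simp
  have dxc: "dist x c = \<epsilon>" unfolding c_def using dist_bt_eq[OF g0] er by simp
  have dcz: "dist c (bt j t) = \<epsilon> + t" if "j \<in> J" "0 < t" "t < \<rho>" for j t
  proof -
    have jg: "j \<in> germs x" "g0 \<noteq> j" using that J_def by auto
    show ?thesis unfolding c_def by (rule dist_bt_bt_eq[OF g0 jg(1) jg(2)]) (use that er in auto)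
  qed
  have Uann: "U \<subseteq> annulus c \<epsilon> (\<epsilon> + \<rho>)"
  proof
    fix w assume "w \<in> U"
    then obtain j t where jt: "j \<in> J" "0 < t" "t < \<rho>" "w = bt j t" unfolding Ueq by auto
    have "dist c w = \<epsilon> + t" using dcz jt by simp
    then show "w \<in> annulus c \<epsilon> (\<epsilon> + \<rho>)" unfolding annulus_def using er jt by auto
  qed
  have Ssub: "Sset (\<epsilon> - \<rho>) \<epsilon> c U \<subseteq> bt g0 ` {0<..<\<rho>}"
  proof
    fix y assume "y \<in> Sset (\<epsilon> - \<rho>) \<epsilon> c U"
    then have ya: "y \<in> annulus c (\<epsilon> - \<rho>) \<epsilon>" and "\<exists>z\<in>U. dist c y + dist y z = dist c z"
      unfolding Sset_def by auto
    then obtain z where z: "z \<in> U" "dist c y + dist y z = dist c z" by blast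
    have dy: "\<epsilon> - \<rho> < dist c y" "dist c y < \<epsilon>" using ya er unfolding annulus_def by auto
    obtain j t where jt: "j \<in> J" "0 < t" "t < \<rho>" "z = bt j t" using z(1) unfolding Ueq by auto
    have jg: "j \<in> germs x" "g0 \<noteq> j" using jt J_def by auto
    have dz: "dist c z = \<epsilon> + t" using dcz jt by simp
    have "dist x y \<le> dist x c + dist c y" by (rule dist_triangle)
    then have "dist x y < 2 * \<epsilon>" using dxc dy by simp
    then have "y \<in> ball x (2 * \<epsilon>)" by simp
    also have "\<dots> = insert x (\<Union>g\<in>germs x. bt g ` {0<..<2 * \<epsilon>})"
      by (rule ball_star) (use er in auto)
    finally consider "y = x" | g u where "g \<in> germs x" "0 < u" "u < 2 * \<epsilon>" "y = bt g u" by auto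
    then show "y \<in> bt g0 ` {0<..<\<rho>}"
    proof cases
      case 1 then show ?thesis using dxc dy by (simp add: dist_commute)
    next
      case 2
      show ?thesis
      proof (cases "g = g0")
        case False
        have "dist c y = \<epsilon> + u" unfolding c_def 2(4)
          by (rule dist_bt_bt_eq[OF g0 2(1)]) (use False 2 er in auto)
        then show ?thesis using dy 2 by simp
      next
        case True
        have "min (u + t) (eta x - u) \<le> dist y z" unfolding 2(4) jt(4) True
          by (rule D2[OF g0 jg(1) jg(2)]) (use 2 jt er etaL in auto)
        moreover have "u + t \<le> eta x - u" using 2 jt er by auto
        ultimately have "u + t \<le> dist y z" by simp
        then have "u < \<rho>" using z(2) dz dy by simp
        then show ?thesis using 2 True by auto
      qed
    qed
  qed
  have rL: "\<rho> \<le> LL x" using er etaL eta(1)[of x] by simp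
  have HS: "hausdorff1 (Sset (\<epsilon> - \<rho>) \<epsilon> c U) \<le> ennreal \<rho>"
  proof -
    have "hausdorff1 (Sset (\<epsilon> - \<rho>) \<epsilon> c U) \<le> hausdorff1 (bt g0 ` {0<..<\<rho>})" by (rule h1_mono[OF Ssub])
    also have "\<dots> \<le> ennreal \<rho>" by (rule haus_seg_le[OF g0 er(1) rL])
    finally show ?thesis .
  qed
  have HU: "ennreal (a * (\<rho> - \<delta>)) \<le> hausdorff1 U"
  proof -
    have "ennreal (real (card J) * (\<rho> - \<delta>)) \<le> hausdorff1_pre \<delta> U"
      by (rule haus_lower[OF JG d]) (use er eta(1)[of x] Ueq in auto)
    also have "\<dots> \<le> hausdorff1 U" by (rule h1_ge_pre[OF d(1)])
    finally show ?thesis unfolding a_def .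
  qed
  have bg: "hausdorff1 U / hausdorff1 (Sset (\<epsilon> - \<rho>) \<epsilon> c U)
      \<le> ennreal C * ennreal (Vkn k n \<epsilon> (\<epsilon> + \<rho>)) / ennreal (Vkn k n (\<epsilon> - \<rho>) \<epsilon>)"
    by (rule BG_def[THEN iffD1, rule_format, OF BG, of \<epsilon> "\<epsilon> + \<rho>" "\<epsilon> - \<rho>" \<epsilon> U c])
       (use er Ub Uann in auto)
  have lhs: "ennreal (a * (\<rho> - \<delta>) / \<rho>) \<le> hausdorff1 U / hausdorff1 (Sset (\<epsilon> - \<rho>) \<epsilon> c U)"
    by (rule ennreal_div_ge[OF HU HS er(1)]) (use d aC C in simp)
  define V1 where "V1 = Vkn k n \<epsilon> (\<epsilon> + \<rho>)"
  define V2 where "V2 = Vkn k n (\<epsilon> - \<rho>) \<epsilon>"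
  have V2p: "0 < V2" unfolding V2_def by (rule er(4))
  have rhs: "ennreal C * ennreal V1 / ennreal V2 \<le> ennreal (C * (1 + \<theta>))"
  proof (cases "0 \<le> V1")
    case True
    have "ennreal C * ennreal V1 / ennreal V2 = ennreal (C * V1 / V2)"
      using C True V2p by (simp add: ennreal_mult[symmetric] divide_ennreal)
    also have "\<dots> \<le> ennreal (C * (1 + \<theta>))"
    proof (rule ennreal_leI)
      have "V1 / V2 \<le> 1 + \<theta>" using er(5) V2p unfolding V1_def V2_def by (simp add: divide_le_eq)
      then have "C * (V1 / V2) \<le> C * (1 + \<theta>)" using C by (intro mult_left_mono) auto
      then show "C * V1 / V2 \<le> C * (1 + \<theta>)" by simp
    qed
    finally show ?thesis .
  next
    case False
    then have "ennreal V1 = 0" by (simp add: ennreal_eq_0_iff)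
    then show ?thesis by simp
  qed
  have "ennreal (a * (\<rho> - \<delta>) / \<rho>) \<le> ennreal (C * (1 + \<theta>))"
    using order_trans[OF order_trans[OF lhs bg] rhs[unfolded V1_def V2_def]] .
  then have "a * (\<rho> - \<delta>) / \<rho> \<le> C * (1 + \<theta>)" using C th0 by (simp add: ennreal_le_iff)
  moreover have "a * (\<rho> - \<delta>) / \<rho> = a * (1 - \<theta>)" unfolding \<delta>_def using er by (simp add: field_simps)
  ultimately show False using key by simp
qed

end


theorem proposition4p4:
  fixes V :: "'a::metric_space set" and E :: "nat set"
    and l :: "nat \<Rightarrow> real" and gamma :: "nat \<Rightarrow> real \<Rightarrow> 'a"
    and k n C :: real and x :: 'a
  assumes "complete (UNIV :: 'a set)"
    and "loc_compact_metric TYPE('a)"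
    and "length_space TYPE('a)"
    and "metric_graph V E l gamma"
    and "n \<ge> 1" and "C \<ge> 1"
    and "BG TYPE('a) k n C"
  shows "deg x \<le> ereal (C + 1)"
proof -
  interpret mg V E l gamma by (rule mg.intro) (use assms(3,4) in auto)
  have "\<not> (C + 1 < real (card (germs x)))"
    using measure_contra[OF assms(7) assms(5) assms(6)] by blast
  then have "real (card (germs x)) \<le> C + 1" by simp
  then have "ereal (real (card (germs x))) \<le> ereal (C + 1)" by simp
  then show ?thesis using deg_le[of x] by (rule order_trans[rotated])
qed

end
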